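(* There are three absolute positive constants $C_1,C_2,C_3$ with the following property. Let $\Omega$ be a compact subset of $\mathbb{R}^d$ with a Borel probability measure $\mu$, let $s\ge2$ be an integer, and let $X_N\subset L_{2s}(\Omega,\mu)$ be any (real or complex) $N$-dimensional subspace. Then for every integer $m\ge C_3N^s$ there exist points $\xi^1,\dots,\xi^m\in\Omega$ and positive weights $\lambda_1,\dots,\lambda_m$ such that for all $f\in X_N$ $$C_1\|f\|_{2s}^{2s}\le\sum_{\nu=1}^m\lambda_\nu|f(\xi^\nu)|^{2s}\le C_2\|f\|_{2s}^{2s}.$$
   Context: $\|f\|_p=(\int_\Omega|f|^p\,d\mu)^{1/p}$. Elements of $L_q(\Omega,\mu)$ are understood as specific functions defined $\mu$-almost everywhere; since $X_N$ is spanned by finitely many such functions, there is a $\mu$-null set $E\subset\Omega$ off which every $f\in X_N$ is defined, and sample points are taken from $\Omega\setminus E$. *)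

theory Defs
  imports "HOL-Probability.Probability"
begin

text \<open>Points of R^d are modelled as functions nat => real vanishing at all
coordinates >= d (so that d can be quantified inside the statement, which is
needed because the constants are absolute, i.e. independent of d).
The type nat => real carries the product topology.\<close>

definition euclid_space :: "nat \<Rightarrow> (nat \<Rightarrow> real) set" where
  "euclid_space d = {x. \<forall>i\<ge>d. x i = 0}"

definition compact_borel_prob :: "nat \<Rightarrow> (nat \<Rightarrow> real) set \<Rightarrow> (nat \<Rightarrow> real) measure \<Rightarrow> bool" where
  "compact_borel_prob d \<Omega> \<mu> \<longleftrightarrow>
     \<Omega> \<subseteq> euclid_space d \<and> compact \<Omega> \<and>
     space \<mu> = \<Omega> \<and> sets \<mu> = sets (restrict_space borel \<Omega>) \<and> prob_space \<mu>"

text \<open>u 0, ..., u (N-1) are (representatives of) elements of L_{2s}(Omega,mu) that are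
linearly independent in L_{2s} (i.e. modulo mu-null functions); their span over the
scalar field 'k is an N-dimensional subspace X_N of L_{2s}.\<close>
definition L_basis :: "(nat \<Rightarrow> real) measure \<Rightarrow> nat \<Rightarrow> nat \<Rightarrow> (nat \<Rightarrow> (nat \<Rightarrow> real) \<Rightarrow> 'k::real_normed_field) \<Rightarrow> bool" where
  "L_basis \<mu> s N u \<longleftrightarrow>
     (\<forall>i<N. u i \<in> borel_measurable \<mu> \<and> integrable \<mu> (\<lambda>x. norm (u i x) ^ (2 * s))) \<and>
     (\<forall>c::nat \<Rightarrow> 'k. (AE x in \<mu>. (\<Sum>i<N. c i * u i x) = 0) \<longrightarrow> (\<forall>i<N. c i = 0))"

definition Lp_pow :: "(nat \<Rightarrow> real) measure \<Rightarrow> nat \<Rightarrow> ((nat \<Rightarrow> real) \<Rightarrow> 'k::real_normed_field) \<Rightarrow> real" where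
  "Lp_pow \<mu> s f = (\<integral>x. norm (f x) ^ (2 * s) \<partial>\<mu>)"

end

theory Submission
  imports Defs "Jordan_Normal_Form.Determinant"
begin

type_synonym cmat = "nat \<Rightarrow> nat \<Rightarrow> complex"
type_synonym cvec = "nat \<Rightarrow> complex"

definition supp :: "nat \<Rightarrow> cmat \<Rightarrow> bool" where
  "supp n A \<longleftrightarrow> (\<forall>i j. (n \<le> i \<or> n \<le> j) \<longrightarrow> A i j = 0)"
definition mm :: "nat \<Rightarrow> cmat \<Rightarrow> cmat \<Rightarrow> cmat" where
  "mm n A B = (\<lambda>i j. if i < n \<and> j < n then (\<Sum>k<n. A i k * B k j) else 0)"
definition Idm :: "nat \<Rightarrow> cmat" where
  "Idm n = (\<lambda>i j. if i < n \<and> i = j then 1 else 0)"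
definition madd :: "cmat \<Rightarrow> cmat \<Rightarrow> cmat" where
  "madd A B = (\<lambda>i j. A i j + B i j)"
definition msc :: "complex \<Rightarrow> cmat \<Rightarrow> cmat" where
  "msc c A = (\<lambda>i j. c * A i j)"
definition adj :: "cmat \<Rightarrow> cmat" where
  "adj A = (\<lambda>i j. cnj (A j i))"
definition herm :: "nat \<Rightarrow> cmat \<Rightarrow> bool" where
  "herm n A \<longleftrightarrow> supp n A \<and> adj A = A"
definition tr :: "nat \<Rightarrow> cmat \<Rightarrow> complex" where
  "tr n A = (\<Sum>i<n. A i i)"
definition ip :: "nat \<Rightarrow> cvec \<Rightarrow> cvec \<Rightarrow> complex" where
  "ip n x y = (\<Sum>i<n. cnj (x i) * y i)"
definition mv :: "nat \<Rightarrow> cmat \<Rightarrow> cvec \<Rightarrow> cvec" where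
  "mv n A y = (\<lambda>i. \<Sum>j<n. A i j * y j)"
definition qf :: "nat \<Rightarrow> cmat \<Rightarrow> cvec \<Rightarrow> complex" where
  "qf n A y = ip n y (mv n A y)"
definition outer :: "nat \<Rightarrow> cvec \<Rightarrow> cvec \<Rightarrow> cmat" where
  "outer n y z = (\<lambda>i j. if i < n \<and> j < n then y i * cnj (z j) else 0)"
definition nz :: "nat \<Rightarrow> cvec \<Rightarrow> bool" where
  "nz n y \<longleftrightarrow> (\<exists>i<n. y i \<noteq> 0)"
definition pd :: "nat \<Rightarrow> cmat \<Rightarrow> bool" where
  "pd n A \<longleftrightarrow> herm n A \<and> (\<forall>y. nz n y \<longrightarrow> Re (qf n A y) > 0)"
definition minv :: "nat \<Rightarrow> cmat \<Rightarrow> cmat" where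
  "minv n A = (SOME X. supp n X \<and> mm n A X = Idm n \<and> mm n X A = Idm n)"

lemma supp_mm[simp]: "supp n (mm n A B)" by (auto simp: supp_def mm_def)
lemma supp_Idm[simp]: "supp n (Idm n)" by (auto simp: supp_def Idm_def)
lemma supp_outer[simp]: "supp n (outer n y z)" by (auto simp: supp_def outer_def)
lemma supp_madd[simp]: "supp n A \<Longrightarrow> supp n B \<Longrightarrow> supp n (madd A B)" by (auto simp: supp_def madd_def)
lemma supp_msc[simp]: "supp n A \<Longrightarrow> supp n (msc c A)" by (auto simp: supp_def msc_def)
lemma supp_adj[simp]: "supp n A \<Longrightarrow> supp n (adj A)" by (auto simp: supp_def adj_def)

lemma mm_assoc: "mm n (mm n A B) C = mm n A (mm n B C)"
proof (intro ext)
  fix i j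
  show "mm n (mm n A B) C i j = mm n A (mm n B C) i j"
  proof (cases "i < n \<and> j < n")
    case True
    have "(\<Sum>k<n. (\<Sum>l<n. A i l * B l k) * C k j) = (\<Sum>k<n. \<Sum>l<n. A i l * B l k * C k j)"
      by (simp add: sum_distrib_right)
    also have "\<dots> = (\<Sum>l<n. \<Sum>k<n. A i l * B l k * C k j)" by (rule sum.swap)
    also have "\<dots> = (\<Sum>l<n. A i l * (\<Sum>k<n. B l k * C k j))"
      by (simp add: sum_distrib_left mult.assoc)
    finally show ?thesis using True by (simp add: mm_def cong: sum.cong_simp)
  qed (auto simp: mm_def)
qed

lemma mm_Idm_left: "supp n A \<Longrightarrow> mm n (Idm n) A = A"
proof (intro ext)
  fix i j assume s: "supp n A"
  show "mm n (Idm n) A i j = A i j"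
  proof (cases "i < n \<and> j < n")
    case True
    have "(\<Sum>k<n. Idm n i k * A k j) = (\<Sum>k<n. if k = i then A i j else 0)"
      by (rule sum.cong) (auto simp: Idm_def)
    then show ?thesis using True by (simp add: mm_def)
  qed (use s in \<open>auto simp: mm_def supp_def\<close>)
qed
lemma mm_Idm_right: "supp n A \<Longrightarrow> mm n A (Idm n) = A"
proof (intro ext)
  fix i j assume s: "supp n A"
  show "mm n A (Idm n) i j = A i j"
  proof (cases "i < n \<and> j < n")
    case True
    have "(\<Sum>k<n. A i k * Idm n k j) = (\<Sum>k<n. if k = j then A i j else 0)"
      by (rule sum.cong) (auto simp: Idm_def)
    then show ?thesis using True by (simp add: mm_def)
  qed (use s in \<open>auto simp: mm_def supp_def\<close>)
qed

lemma mm_madd_left: "mm n (madd A B) C = madd (mm n A C) (mm n B C)"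
  by (auto simp: mm_def madd_def fun_eq_iff distrib_right sum.distrib)
lemma mm_madd_right: "mm n C (madd A B) = madd (mm n C A) (mm n C B)"
  by (auto simp: mm_def madd_def fun_eq_iff distrib_left sum.distrib)
lemma mm_msc_left: "mm n (msc c A) B = msc c (mm n A B)"
  by (auto simp: mm_def msc_def fun_eq_iff sum_distrib_left mult.assoc)
lemma mm_msc_right: "mm n A (msc c B) = msc c (mm n A B)"
  by (auto simp: mm_def msc_def fun_eq_iff sum_distrib_left mult.assoc mult.left_commute)

lemma tr_madd: "tr n (madd A B) = tr n A + tr n B" by (simp add: tr_def madd_def sum.distrib)
lemma tr_msc: "tr n (msc c A) = c * tr n A" by (simp add: tr_def msc_def sum_distrib_left)
lemma tr_Idm: "tr n (Idm n) = of_nat n" by (simp add: tr_def Idm_def)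
lemma tr_mm_comm: "tr n (mm n A B) = tr n (mm n B A)"
proof -
  have "tr n (mm n A B) = (\<Sum>i<n. \<Sum>k<n. A i k * B k i)" by (simp add: tr_def mm_def)
  also have "\<dots> = (\<Sum>k<n. \<Sum>i<n. B k i * A i k)" by (subst sum.swap) (simp add: mult.commute)
  also have "\<dots> = tr n (mm n B A)" by (simp add: tr_def mm_def)
  finally show ?thesis .
qed

lemma adj_adj[simp]: "adj (adj A) = A" by (simp add: adj_def)
lemma adj_mm: "adj (mm n A B) = mm n (adj B) (adj A)"
  by (auto simp: adj_def mm_def fun_eq_iff mult.commute)
lemma adj_Idm[simp]: "adj (Idm n) = Idm n" by (auto simp: adj_def Idm_def fun_eq_iff)
lemma adj_madd: "adj (madd A B) = madd (adj A) (adj B)" by (simp add: adj_def madd_def fun_eq_iff)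
lemma adj_msc: "adj (msc c A) = msc (cnj c) (adj A)" by (simp add: adj_def msc_def fun_eq_iff)

lemma herm_Idm[simp]: "herm n (Idm n)" by (simp add: herm_def)
lemma herm_madd: "herm n A \<Longrightarrow> herm n B \<Longrightarrow> herm n (madd A B)"
  by (simp add: herm_def adj_madd)
lemma herm_msc: "herm n A \<Longrightarrow> c \<in> \<real> \<Longrightarrow> herm n (msc c A)"
  by (auto simp: herm_def adj_msc Reals_cnj_iff)
lemma herm_outer: "herm n (outer n y y)"
  by (simp add: herm_def) (auto simp: adj_def outer_def fun_eq_iff mult.commute)
lemma herm_mm_self: "herm n X \<Longrightarrow> herm n (mm n X X)"
  by (simp add: herm_def adj_mm)

lemma inv_exists:
  assumes inj: "\<And>y. (\<forall>i<n. mv n A y i = 0) \<Longrightarrow> \<not> nz n y"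
  shows "\<exists>X. supp n X \<and> mm n A X = Idm n \<and> mm n X A = Idm n"
proof -
  define M where "M = Matrix.mat n n (\<lambda>(i,j). A i j)"
  have M: "M \<in> carrier_mat n n" by (simp add: M_def)
  have "det M \<noteq> 0"
  proof
    assume "det M = 0"
    then obtain v where v: "v \<in> carrier_vec n" "v \<noteq> 0\<^sub>v n" "M *\<^sub>v v = 0\<^sub>v n"
      using det_0_iff_vec_prod_zero_field[OF M] by auto
    define y where "y = (\<lambda>i. if i < n then v $ i else 0)"
    have "\<forall>i<n. mv n A y i = 0"
    proof (intro allI impI)
      fix i assume i: "i < n"
      have "(M *\<^sub>v v) $ i = 0" using v(3) i by simp
      moreover have "(M *\<^sub>v v) $ i = (\<Sum>j<n. A i j * v $ j)"
        using i v(1) by (simp add: M_def scalar_prod_def atLeast0LessThan)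
      moreover have "mv n A y i = (\<Sum>j<n. A i j * v $ j)"
        by (simp add: mv_def y_def)
      ultimately show "mv n A y i = 0" by simp
    qed
    moreover have "nz n y"
    proof (rule ccontr)
      assume "\<not> nz n y"
      then have "v = 0\<^sub>v n" using v(1) by (auto simp: nz_def y_def vec_eq_iff)
      with v(2) show False by simp
    qed
    ultimately show False using inj by blast
  qed
  then have "M \<in> Units (ring_mat TYPE(complex) n b)" by (rule det_non_zero_imp_unit[OF M])
  then obtain B where B: "B \<in> carrier_mat n n" "B * M = 1\<^sub>m n" "M * B = 1\<^sub>m n"
    unfolding Units_def ring_mat_def by auto
  define X where "X = (\<lambda>i j. if i < n \<and> j < n then B $$ (i,j) else 0)"
  have "mm n A X = Idm n"
  proof (intro ext)
    fix i j
    show "mm n A X i j = Idm n i j"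
    proof (cases "i < n \<and> j < n")
      case True
      have "(M * B) $$ (i,j) = (\<Sum>k<n. A i k * B $$ (k,j))"
        using True B(1) by (simp add: M_def scalar_prod_def atLeast0LessThan)
      moreover have "mm n A X i j = (\<Sum>k<n. A i k * B $$ (k,j))"
        using True by (simp add: mm_def X_def)
      ultimately show ?thesis using True B(3) by (simp add: Idm_def)
    qed (auto simp: mm_def Idm_def)
  qed
  moreover have "mm n X A = Idm n"
  proof (intro ext)
    fix i j
    show "mm n X A i j = Idm n i j"
    proof (cases "i < n \<and> j < n")
      case True
      have "(B * M) $$ (i,j) = (\<Sum>k<n. B $$ (i,k) * A k j)"
        using True B(1) by (simp add: M_def scalar_prod_def atLeast0LessThan)
      moreover have "mm n X A i j = (\<Sum>k<n. B $$ (i,k) * A k j)"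
        using True by (simp add: mm_def X_def)
      ultimately show ?thesis using True B(2) by (simp add: Idm_def)
    qed (auto simp: mm_def Idm_def)
  qed
  moreover have "supp n X" by (simp add: supp_def X_def)
  ultimately show ?thesis by blast
qed

lemma ip_cnj: "cnj (ip n x y) = ip n y x" by (simp add: ip_def mult.commute)
lemma ip_cong: "(\<And>i. i < n \<Longrightarrow> x i = x' i) \<Longrightarrow> (\<And>i. i < n \<Longrightarrow> y i = y' i) \<Longrightarrow> ip n x y = ip n x' y'"
  by (simp add: ip_def)
lemma cnj_mult_self: "cnj z * z = of_real ((cmod z)^2)"
  by (metis complex_norm_square mult.commute)
lemma ip_self: "ip n y y = of_real (\<Sum>i<n. (cmod (y i))^2)"
  unfolding ip_def of_real_sum by (rule sum.cong) (auto simp: cnj_mult_self simp del: of_real_power)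
lemma ip_self_nonneg: "Re (ip n y y) \<ge> 0"
  by (simp add: ip_self sum_nonneg)
lemma ip_self_pos: "nz n y \<Longrightarrow> Re (ip n y y) > 0"
proof -
  assume "nz n y"
  then obtain i where i: "i < n" "y i \<noteq> 0" by (auto simp: nz_def)
  have "(\<Sum>j<n. (cmod (y j))^2) \<ge> (cmod (y i))^2"
    by (rule member_le_sum) (use i in auto)
  moreover have "(cmod (y i))^2 > 0" using i by simp
  ultimately have "(\<Sum>j<n. (cmod (y j))^2) > 0" by linarith
  then show ?thesis by (simp add: ip_self)
qed
lemma ip_zero_left: "\<not> nz n y \<Longrightarrow> ip n y z = 0" by (simp add: ip_def nz_def)

lemma ip_mv_adj: "ip n x (mv n A y) = ip n (mv n (adj A) x) y"
proof -
  have "ip n x (mv n A y) = (\<Sum>i<n. \<Sum>j<n. cnj (x i) * A i j * y j)"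
    by (simp add: ip_def mv_def sum_distrib_left mult.assoc)
  also have "\<dots> = (\<Sum>j<n. \<Sum>i<n. cnj (x i) * A i j * y j)" by (rule sum.swap)
  also have "\<dots> = ip n (mv n (adj A) x) y"
    by (simp add: ip_def mv_def adj_def sum_distrib_left sum_distrib_right mult_ac)
  finally show ?thesis .
qed

lemma mv_mm: "supp n A \<Longrightarrow> mv n (mm n A B) y = mv n A (mv n B y)"
proof (intro ext)
  fix i assume s: "supp n A"
  show "mv n (mm n A B) y i = mv n A (mv n B y) i"
  proof (cases "i < n")
    case True
    have "mv n (mm n A B) y i = (\<Sum>j<n. \<Sum>k<n. A i k * B k j * y j)"
      using True by (simp add: mv_def mm_def sum_distrib_right)
    also have "\<dots> = (\<Sum>k<n. \<Sum>j<n. A i k * B k j * y j)" by (rule sum.swap)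
    also have "\<dots> = mv n A (mv n B y) i"
      by (simp add: mv_def sum_distrib_left mult.assoc)
    finally show ?thesis .
  next
    case False
    then show ?thesis using s by (simp add: mv_def mm_def supp_def)
  qed
qed

lemma mv_Idm: "i < n \<Longrightarrow> mv n (Idm n) y i = y i"
proof -
  assume i: "i < n"
  have "(\<Sum>j<n. Idm n i j * y j) = (\<Sum>j<n. if j = i then y i else 0)"
    by (rule sum.cong) (auto simp: Idm_def)
  then show ?thesis using i by (simp add: mv_def)
qed
lemma ip_mv_Idm: "ip n x (mv n (Idm n) y) = ip n x y"
  by (rule ip_cong) (auto simp: mv_Idm)

lemma mv_madd: "mv n (madd A B) y = (\<lambda>i. mv n A y i + mv n B y i)"
  by (simp add: mv_def madd_def distrib_right sum.distrib)
lemma mv_msc: "mv n (msc c A) y = (\<lambda>i. c * mv n A y i)"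
  by (simp add: mv_def msc_def sum_distrib_left mult.assoc)
lemma ip_add_right: "ip n x (\<lambda>i. y i + z i) = ip n x y + ip n x z"
  by (simp add: ip_def distrib_left sum.distrib)
lemma ip_scale_right: "ip n x (\<lambda>i. c * y i) = c * ip n x y"
  by (simp add: ip_def sum_distrib_left mult.left_commute)

lemma qf_madd: "qf n (madd A B) y = qf n A y + qf n B y"
  by (simp add: qf_def mv_madd ip_add_right)
lemma qf_msc: "qf n (msc c A) y = c * qf n A y"
  by (simp add: qf_def mv_msc ip_scale_right)
lemma qf_Idm: "qf n (Idm n) y = ip n y y"
  by (simp add: qf_def ip_mv_Idm)
lemma qf_outer: "qf n (outer n a b) y = ip n y a * ip n b y"
proof -
  have "qf n (outer n a b) y = (\<Sum>i<n. \<Sum>j<n. cnj (y i) * a i * (cnj (b j) * y j))"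
    by (simp add: qf_def ip_def mv_def outer_def sum_distrib_left mult.assoc)
  also have "\<dots> = ip n y a * ip n b y"
    by (simp add: ip_def sum_product)
  finally show ?thesis .
qed
lemma qf_zero: "\<not> nz n y \<Longrightarrow> qf n A y = 0" by (simp add: qf_def ip_zero_left)

lemma qf_herm_real: "herm n A \<Longrightarrow> cnj (qf n A y) = qf n A y"
  unfolding qf_def herm_def by (metis ip_cnj ip_mv_adj)
lemma qf_herm_Im: "herm n A \<Longrightarrow> Im (qf n A y) = 0"
  using qf_herm_real[of n A y] by (metis Reals_cnj_iff complex_is_Real_iff)
lemma qf_herm_ofreal: "herm n A \<Longrightarrow> qf n A y = of_real (Re (qf n A y))"
  using qf_herm_Im[of n A y] by (simp add: complex_eq_iff)

lemma qf_mm: "supp n A \<Longrightarrow> qf n (mm n A B) y = ip n (mv n (adj A) y) (mv n B y)"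
  by (simp add: qf_def mv_mm ip_mv_adj)

lemma pd_qf_nonneg: "pd n A \<Longrightarrow> Re (qf n A y) \<ge> 0"
  by (cases "nz n y") (auto simp: pd_def qf_zero less_imp_le)

lemma pd_inj: "pd n A \<Longrightarrow> (\<forall>i<n. mv n A y i = 0) \<Longrightarrow> \<not> nz n y"
proof
  assume a: "pd n A" "\<forall>i<n. mv n A y i = 0" "nz n y"
  have "qf n A y = 0" using a(2) by (simp add: qf_def ip_def)
  with a(1,3) show False by (auto simp: pd_def)
qed

lemma pd_inv: assumes "pd n A" shows "supp n (minv n A) \<and> mm n A (minv n A) = Idm n \<and> mm n (minv n A) A = Idm n"
proof -
  have "\<exists>X. supp n X \<and> mm n A X = Idm n \<and> mm n X A = Idm n"
    by (rule inv_exists) (rule pd_inj[OF assms])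
  then show ?thesis unfolding minv_def by (rule someI_ex)
qed

lemma minv_unique: assumes "pd n A" "supp n X" "mm n A X = Idm n" shows "minv n A = X"
proof -
  have "X = mm n (mm n (minv n A) A) X" using pd_inv[OF assms(1)] assms(2) by (simp add: mm_Idm_left)
  also have "\<dots> = mm n (minv n A) (mm n A X)" by (rule mm_assoc)
  also have "\<dots> = minv n A" using assms(3) pd_inv[OF assms(1)] by (simp add: mm_Idm_right)
  finally show ?thesis by simp
qed

lemma minv_herm: assumes "pd n A" shows "herm n (minv n A)"
proof -
  have hA: "adj A = A" "supp n A" using assms by (auto simp: pd_def herm_def)
  have "mm n A (adj (minv n A)) = adj (mm n (minv n A) A)" by (simp add: adj_mm hA)
  also have "\<dots> = Idm n" using pd_inv[OF assms] by simp
  finally have "minv n A = adj (minv n A)"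
    by (intro minv_unique assms) (use pd_inv[OF assms] in auto)
  then show ?thesis using pd_inv[OF assms] by (simp add: herm_def)
qed

lemma mv_inv_cancel: assumes "pd n A" "i < n" shows "mv n A (mv n (minv n A) y) i = y i"
proof -
  have "mv n A (mv n (minv n A) y) = mv n (mm n A (minv n A)) y"
    using assms(1) by (simp add: mv_mm pd_def herm_def)
  then show ?thesis using pd_inv[OF assms(1)] assms(2) by (simp add: mv_Idm)
qed
lemma mv_inv_cancel2: assumes "pd n A" "i < n" shows "mv n (minv n A) (mv n A y) i = y i"
proof -
  have s: "supp n (minv n A)" using pd_inv[OF assms(1)] by blast
  have "mv n (minv n A) (mv n A y) = mv n (mm n (minv n A) A) y"
    using s by (simp add: mv_mm)
  then show ?thesis using pd_inv[OF assms(1)] assms(2) by (simp add: mv_Idm)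
qed

lemma qf_minv: assumes "pd n A" shows "qf n (minv n A) y = qf n A (mv n (minv n A) y)"
proof -
  let ?z = "mv n (minv n A) y"
  have "qf n (minv n A) y = ip n y ?z" by (simp add: qf_def)
  also have "\<dots> = ip n (mv n A ?z) ?z" by (rule ip_cong) (auto simp: mv_inv_cancel assms)
  also have "\<dots> = ip n ?z (mv n (adj A) ?z)" by (simp add: ip_mv_adj)
  also have "\<dots> = qf n A ?z" using assms by (simp add: qf_def pd_def herm_def)
  finally show ?thesis .
qed

lemma minv_pd: assumes "pd n A" shows "pd n (minv n A)"
  unfolding pd_def
proof (intro conjI allI impI)
  show "herm n (minv n A)" by (rule minv_herm[OF assms])
  fix y assume y: "nz n y"
  have "nz n (mv n (minv n A) y)"
  proof (rule ccontr)
    assume "\<not> nz n (mv n (minv n A) y)"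
    then have "\<forall>i<n. mv n (minv n A) y i = 0" by (simp add: nz_def)
    then have "\<forall>i<n. mv n A (mv n (minv n A) y) i = 0" by (auto simp: mv_def intro!: sum.neutral)
    then have "\<forall>i<n. y i = 0" using mv_inv_cancel[OF assms] by simp
    with y show False by (auto simp: nz_def)
  qed
  then show "Re (qf n (minv n A) y) > 0" using assms by (simp add: qf_minv pd_def)
qed

lemma cs_scalar:
  fixes a c :: real and b :: complex
  assumes h: "\<And>l::complex. 0 \<le> a - 2 * Re (l * b) + (cmod l)^2 * c" and c: "c \<ge> 0"
  shows "(cmod b)^2 \<le> a * c"
proof (cases "c = 0")
  case True
  show ?thesis
  proof (cases "b = 0")
    case False
    define t where "t = (a + 1) / (2 * (cmod b)^2)"
    have bp: "(cmod b)^2 > 0" using False by simp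
    have "of_real t * cnj b * b = of_real (t * (cmod b)^2)"
      by (simp only: mult.assoc cnj_mult_self of_real_mult)
    then have "Re (of_real t * cnj b * b) = t * (cmod b)^2" by (simp only: Re_complex_of_real)
    moreover have "t * (cmod b)^2 = (a+1)/2" using bp by (simp add: t_def field_simps)
    ultimately have "Re (of_real t * cnj b * b) = (a+1)/2" by simp
    with h[of "of_real t * cnj b"] True show ?thesis by simp
  qed (use True in simp)
next
  case False
  then have cp: "c > 0" using c by simp
  define l where "l = cnj b / of_real c"
  have "Re (l * b) = (cmod b)^2 / c"
    by (simp add: l_def complex_norm_square[symmetric] mult.commute)
  moreover have "(cmod l)^2 = (cmod b)^2 / c^2"
    using cp by (simp add: l_def norm_divide power_divide)
  ultimately have "0 \<le> a - 2 * ((cmod b)^2 / c) + (cmod b)^2 / c^2 * c" using h[of l] by simp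
  also have "\<dots> = a - (cmod b)^2 / c" using cp by (simp add: power2_eq_square field_simps)
  finally show ?thesis using cp by (simp add: field_simps)
qed

lemma qf_diff: assumes "herm n A"
  shows "Re (qf n A (\<lambda>i. x i - l * y i)) = Re (qf n A x) - 2 * Re (l * ip n x (mv n A y)) + (cmod l)^2 * Re (qf n A y)"
proof -
  have hA: "adj A = A" using assms by (simp add: herm_def)
  have mvd: "mv n A (\<lambda>i. x i - l * y i) = (\<lambda>i. mv n A x i - l * mv n A y i)"
    by (simp add: mv_def sum_subtractf sum_distrib_left right_diff_distrib mult.left_commute)
  have ipd: "ip n (\<lambda>i. x i - l * y i) w = ip n x w - cnj l * ip n y w" for w
    by (simp add: ip_def sum_subtractf sum_distrib_left algebra_simps)
  have ipd2: "ip n w (\<lambda>i. u i - l * v i) = ip n w u - l * ip n w v" for w u v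
    by (simp add: ip_def sum_subtractf sum_distrib_left right_diff_distrib mult.left_commute)
  have yx: "ip n y (mv n A x) = cnj (ip n x (mv n A y))"
    by (metis hA ip_cnj ip_mv_adj)
  have "qf n A (\<lambda>i. x i - l * y i) = qf n A x - l * ip n x (mv n A y) - cnj l * cnj (ip n x (mv n A y)) + cnj l * l * qf n A y"
    unfolding qf_def mvd ipd ipd2 yx by (simp add: algebra_simps)
  moreover have "Re (cnj l * l * qf n A y) = (cmod l)^2 * Re (qf n A y)"
    by (simp add: complex_norm_square[symmetric] mult.commute)
  moreover have "Re (l * ip n x (mv n A y)) = Re (cnj l * cnj (ip n x (mv n A y)))"
    by simp
  ultimately show ?thesis by simp
qed

lemma pd_cs: assumes "pd n A"
  shows "(cmod (ip n x (mv n A y)))^2 \<le> Re (qf n A x) * Re (qf n A y)"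
proof (rule cs_scalar)
  fix l :: complex
  have "0 \<le> Re (qf n A (\<lambda>i. x i - l * y i))" by (rule pd_qf_nonneg[OF assms])
  then show "0 \<le> Re (qf n A x) - 2 * Re (l * ip n x (mv n A y)) + (cmod l)^2 * Re (qf n A y)"
    using qf_diff[of n A x l y] assms by (simp add: pd_def)
qed (rule pd_qf_nonneg[OF assms])

lemma outer_cong: "(\<And>i. i < n \<Longrightarrow> a i = a' i) \<Longrightarrow> outer n a b = outer n a' b"
  by (auto simp: outer_def fun_eq_iff)
lemma qf_cong: "(\<And>i. i < n \<Longrightarrow> x i = x' i) \<Longrightarrow> qf n A x = qf n A x'"
  unfolding qf_def by (rule ip_cong) (auto simp: mv_def)

lemma mm_outer_right: "mm n A (outer n a b) = outer n (mv n A a) b"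
  by (auto simp: mm_def outer_def mv_def fun_eq_iff sum_distrib_right mult.assoc)
lemma mm_outer_left: "mm n (outer n a b) A = outer n a (mv n (adj A) b)"
  by (auto simp: mm_def outer_def mv_def adj_def fun_eq_iff sum_distrib_left mult_ac)
lemma mm_outer_outer: "mm n (outer n a b) (outer n c d) = msc (ip n b c) (outer n a d)"
  by (auto simp: mm_def outer_def msc_def ip_def fun_eq_iff sum_distrib_left sum_distrib_right mult_ac)
lemma tr_outer: "tr n (outer n a b) = ip n b a"
  by (simp add: tr_def outer_def ip_def mult.commute)

lemma unit_qf: assumes i: "i < n" shows "qf n Y (\<lambda>k. if k = i then 1 else 0) = Y i i"
proof -
  have m: "mv n Y (\<lambda>k. if k = i then 1 else 0) a = Y a i" for a
  proof -
    have "(\<Sum>b<n. Y a b * (if b = i then 1 else 0)) = (\<Sum>b<n. if b = i then Y a i else 0)"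
      by (rule sum.cong) auto
    then show ?thesis using i by (simp add: mv_def)
  qed
  have "(\<Sum>a<n. cnj (if a = i then 1 else 0) * Y a i) = (\<Sum>a<n. if a = i then Y i i else 0)"
    by (rule sum.cong) auto
  then show ?thesis using i by (simp add: qf_def ip_def m)
qed

lemma pd_diag_pos: "pd n Y \<Longrightarrow> i < n \<Longrightarrow> Re (Y i i) > 0"
proof -
  assume a: "pd n Y" "i < n"
  have "nz n (\<lambda>k. if k = i then 1 else 0)" using a(2) by (auto simp: nz_def)
  then have "Re (qf n Y (\<lambda>k. if k = i then 1 else 0)) > 0" using a(1) by (simp add: pd_def)
  then show ?thesis using unit_qf[OF a(2)] by simp
qed

lemma pd_tr_pos: "pd n Y \<Longrightarrow> 0 < n \<Longrightarrow> Re (tr n Y) > 0"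
proof -
  assume a: "pd n Y" "0 < n"
  have "Re (tr n Y) = (\<Sum>i<n. Re (Y i i))" by (simp add: tr_def)
  also have "\<dots> > 0" by (rule sum_pos) (use a pd_diag_pos in auto)
  finally show ?thesis .
qed

lemma tr_cong_form: assumes "herm n Z"
  shows "tr n (mm n Z (mm n Y Z)) = (\<Sum>j<n. qf n Y (\<lambda>k. Z k j))"
proof -
  have hz: "\<And>j k. cnj (Z k j) = Z j k" using assms unfolding herm_def adj_def by (metis)
  have "tr n (mm n Z (mm n Y Z)) = (\<Sum>j<n. \<Sum>k<n. Z j k * (\<Sum>l<n. Y k l * Z l j))"
    by (simp add: tr_def mm_def cong: sum.cong_simp)
  also have "\<dots> = (\<Sum>j<n. qf n Y (\<lambda>k. Z k j))"
    by (rule sum.cong[OF refl]) (simp add: qf_def ip_def mv_def hz)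
  finally show ?thesis .
qed

lemma tr_cong_nonneg: assumes "herm n Z" "pd n Y"
  shows "Re (tr n (mm n Z (mm n Y Z))) \<ge> 0"
  unfolding tr_cong_form[OF assms(1)] by (simp add: sum_nonneg pd_qf_nonneg[OF assms(2)])

lemma minv_sq_pos: assumes "pd n M" "0 < n"
  shows "Re (tr n (mm n (minv n M) (minv n M))) > 0"
proof -
  let ?X = "minv n M"
  have pX: "pd n ?X" by (rule minv_pd[OF assms(1)])
  have hX: "herm n ?X" using pX by (simp add: pd_def)
  have "mm n ?X ?X = mm n ?X (mm n (Idm n) ?X)" using hX by (simp add: herm_def mm_Idm_left)
  then have e: "tr n (mm n ?X ?X) = (\<Sum>j<n. qf n (Idm n) (\<lambda>k. ?X k j))"
    using tr_cong_form[OF hX] by simp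
  have "Re (tr n (mm n ?X ?X)) = (\<Sum>j<n. Re (ip n (\<lambda>k. ?X k j) (\<lambda>k. ?X k j)))"
    by (simp add: e qf_Idm)
  also have "\<dots> > 0"
  proof (rule sum_pos2[of _ 0])
    have "Re (?X 0 0) > 0" using pd_diag_pos[OF pX assms(2)] .
    then have "nz n (\<lambda>k. ?X k 0)" using assms(2) by (auto simp: nz_def)
    then show "0 < Re (ip n (\<lambda>k. ?X k 0) (\<lambda>k. ?X k 0))" by (rule ip_self_pos)
  qed (use assms(2) ip_self_nonneg in auto)
  finally show ?thesis .
qed

lemma pd_add_psd: assumes "pd n M" "herm n B" "\<And>x. Re (qf n B x) \<ge> 0" shows "pd n (madd M B)"
  using assms unfolding pd_def by (auto simp: herm_madd qf_madd add_pos_nonneg)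

lemma qf_outer_self: "qf n (outer n y y) x = of_real ((cmod (ip n x y))^2)"
proof -
  have "ip n y x = cnj (ip n x y)" by (simp add: ip_cnj)
  then show ?thesis by (simp only: qf_outer) (metis cnj_mult_self mult.commute)
qed

lemma pd_shift: assumes "pd n M" "\<delta> \<ge> 0" shows "pd n (madd M (msc (of_real \<delta>) (Idm n)))"
  by (rule pd_add_psd[OF assms(1)]) (auto simp: herm_msc qf_msc qf_Idm ip_self_nonneg assms(2))

lemma pd_X: assumes "pd n M" shows "supp n (minv n M)" "adj (minv n M) = minv n M"
  using minv_herm[OF assms] by (auto simp: herm_def)

lemma sm_cs: assumes pM: "pd n M"
  shows "(cmod (ip n x y))^2 \<le> Re (qf n M x) * Re (qf n (minv n M) y)"
proof -
  let ?z = "mv n (minv n M) y"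
  have "ip n x (mv n M ?z) = ip n x y" by (rule ip_cong) (auto simp: mv_inv_cancel[OF pM])
  moreover have "qf n M ?z = qf n (minv n M) y" by (simp add: qf_minv[OF pM])
  ultimately show ?thesis using pd_cs[OF pM, of x ?z] by simp
qed

lemma sherman_morrison_pd:
  assumes pM: "pd n M" and q: "1 + c * Re (qf n (minv n M) y) > 0"
  shows "pd n (madd M (msc (of_real c) (outer n y y)))"
  unfolding pd_def
proof (intro conjI allI impI)
  show "herm n (madd M (msc (of_real c) (outer n y y)))"
    using pM by (intro herm_madd herm_msc herm_outer) (auto simp: pd_def)
  fix x assume x: "nz n x"
  let ?q = "Re (qf n (minv n M) y)"
  have qx: "Re (qf n M x) > 0" using pM x by (simp add: pd_def)
  have e: "Re (qf n (madd M (msc (of_real c) (outer n y y))) x) = Re (qf n M x) + c * (cmod (ip n x y))^2"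
    by (simp add: qf_madd qf_msc qf_outer_self del: of_real_power)
  have cs: "(cmod (ip n x y))^2 \<le> Re (qf n M x) * ?q" by (rule sm_cs[OF pM])
  show "Re (qf n (madd M (msc (of_real c) (outer n y y))) x) > 0"
  proof (cases "c \<ge> 0")
    case True
    then show ?thesis unfolding e using qx by (simp add: add_pos_nonneg)
  next
    case False
    then have "c * (cmod (ip n x y))^2 \<ge> c * (Re (qf n M x) * ?q)"
      using cs by (simp add: mult_le_cancel_left)
    moreover have "Re (qf n M x) + c * (Re (qf n M x) * ?q) = Re (qf n M x) * (1 + c * ?q)"
      by (simp add: algebra_simps)
    moreover have "Re (qf n M x) * (1 + c * ?q) > 0" using qx q by simp
    ultimately show ?thesis unfolding e by linarith
  qed
qed

lemma sherman_morrison_tr: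
  assumes pM: "pd n M" and q: "1 + c * Re (qf n (minv n M) y) > 0"
  shows "Re (tr n (minv n (madd M (msc (of_real c) (outer n y y))))) =
     Re (tr n (minv n M)) - c * Re (qf n (mm n (minv n M) (minv n M)) y) / (1 + c * Re (qf n (minv n M) y))"
proof -
  let ?X = "minv n M" and ?P = "outer n y y"
  let ?q = "Re (qf n ?X y)"
  let ?xy = "mv n ?X y"
  define k where "k = c / (1 + c * ?q)"
  let ?R = "outer n y ?xy"
  define Z where "Z = madd ?X (msc (of_real (- k)) (outer n ?xy ?xy))"
  have sX: "supp n ?X" and aX: "adj ?X = ?X" using pd_X[OF pM] by auto
  have hM: "supp n M" "adj M = M" using pM by (auto simp: pd_def herm_def)
  have pN: "pd n (madd M (msc (of_real c) ?P))" by (rule sherman_morrison_pd[OF pM q])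
  have e1: "mm n M ?X = Idm n" using pd_inv[OF pM] by blast
  have e2: "mm n M (outer n ?xy ?xy) = ?R"
    unfolding mm_outer_right by (rule outer_cong) (simp add: mv_inv_cancel[OF pM])
  have e3: "mm n ?P ?X = ?R" by (simp add: mm_outer_left aX)
  have qy: "ip n y ?xy = of_real ?q"
    using qf_herm_ofreal[OF minv_herm[OF pM], of y] by (simp add: qf_def)
  have e4: "mm n ?P (outer n ?xy ?xy) = msc (of_real ?q) ?R"
    by (simp add: mm_outer_outer qy)
  have kk: "- k + c - c * k * ?q = 0" using q by (simp add: k_def field_simps)
  have "mm n (madd M (msc (of_real c) ?P)) Z =
        madd (madd (Idm n) (msc (of_real c) ?R)) (msc (- of_real k) (madd ?R (msc (of_real c) (msc (of_real ?q) ?R))))"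
    unfolding Z_def by (simp add: mm_madd_left mm_madd_right mm_msc_left mm_msc_right e1 e2 e3 e4)
  also have "\<dots> = Idm n"
  proof (intro ext)
    fix i j
    have "of_real c + (- of_real k) + (- of_real k) * (of_real c * of_real ?q) = (of_real (- k + c - c * k * ?q) :: complex)"
      by (simp add: algebra_simps)
    also have "\<dots> = 0" using kk by simp
    finally have "(of_real c + (- of_real k) + (- of_real k) * (of_real c * of_real ?q)) * ?R i j = 0" by simp
    then show "madd (madd (Idm n) (msc (of_real c) ?R)) (msc (- of_real k) (madd ?R (msc (of_real c) (msc (of_real ?q) ?R)))) i j = Idm n i j"
      by (simp add: madd_def msc_def algebra_simps)
  qed
  finally have "minv n (madd M (msc (of_real c) ?P)) = Z"
    by (intro minv_unique pN) (auto simp: Z_def sX)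
  moreover have "Re (tr n Z) = Re (tr n ?X) - k * Re (qf n (mm n ?X ?X) y)"
  proof -
    have "qf n (mm n ?X ?X) y = ip n ?xy ?xy" using sX aX by (simp add: qf_mm)
    then show ?thesis by (simp add: Z_def tr_madd tr_msc tr_outer)
  qed
  ultimately show ?thesis by (simp add: k_def)
qed

lemma real_disc: fixes T a c :: real
  assumes "\<And>l. 0 \<le> T - 2 * l * a + l^2 * c" "c > 0" shows "a^2 \<le> T * c"
proof -
  have "0 \<le> T - 2 * (a / c) * a + (a / c)^2 * c" by (rule assms(1))
  also have "\<dots> = T - a^2 / c" using assms(2) by (simp add: power2_eq_square field_simps)
  finally show ?thesis using assms(2) by (simp add: field_simps)
qed

lemma tr_cs: assumes hX: "herm n X" and pY: "pd n Y" and n: "0 < n"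
  shows "(Re (tr n (mm n X Y)))^2 \<le> Re (tr n (mm n X (mm n Y X))) * Re (tr n Y)"
proof (rule real_disc)
  fix l :: real
  define Z where "Z = madd X (msc (of_real (- l)) (Idm n))"
  have hZ: "herm n Z" unfolding Z_def by (intro herm_madd herm_msc hX herm_Idm) auto
  have sX: "supp n X" using hX by (simp add: herm_def)
  have sY: "supp n Y" using pY by (simp add: pd_def herm_def)
  have "0 \<le> Re (tr n (mm n Z (mm n Y Z)))" by (rule tr_cong_nonneg[OF hZ pY])
  also have "tr n (mm n Z (mm n Y Z)) = tr n (mm n X (mm n Y X)) - of_real l * tr n (mm n X Y) - of_real l * tr n (mm n Y X) + of_real l * of_real l * tr n Y"
    unfolding Z_def using sX sY
    by (simp add: mm_madd_left mm_madd_right mm_msc_left mm_msc_right mm_Idm_left mm_Idm_right tr_madd tr_msc algebra_simps)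
  also have "tr n (mm n Y X) = tr n (mm n X Y)" by (rule tr_mm_comm)
  finally show "0 \<le> Re (tr n (mm n X (mm n Y X))) - 2 * l * Re (tr n (mm n X Y)) + l^2 * Re (tr n Y)"
    by (simp add: power2_eq_square algebra_simps)
qed (rule pd_tr_pos[OF pY n])

lemma shift_back: "supp n N \<Longrightarrow> madd (madd N (msc (of_real (- \<delta>)) (Idm n))) (msc (of_real \<delta>) (Idm n)) = N"
  by (auto simp: madd_def msc_def fun_eq_iff)

lemma up_facts:
  assumes pM: "pd n M" and d: "\<delta> > 0" and n: "0 < n"
  shows "pd n (madd M (msc (of_real \<delta>) (Idm n)))"
    and "Re (tr n (minv n M)) - Re (tr n (minv n (madd M (msc (of_real \<delta>) (Idm n))))) > 0"
    and "\<delta> * Re (tr n (mm n (minv n (madd M (msc (of_real \<delta>) (Idm n)))) (minv n (madd M (msc (of_real \<delta>) (Idm n))))))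
          \<le> Re (tr n (minv n M)) - Re (tr n (minv n (madd M (msc (of_real \<delta>) (Idm n)))))"
proof -
  let ?M' = "madd M (msc (of_real \<delta>) (Idm n))"
  let ?Y = "minv n M" and ?X = "minv n ?M'"
  show pM': "pd n ?M'" by (rule pd_shift[OF pM]) (use d in simp)
  have sY: "supp n ?Y" and sX: "supp n ?X" using pd_inv[OF pM] pd_inv[OF pM'] by auto
  have hX: "herm n ?X" by (rule minv_herm[OF pM'])
  have pY: "pd n ?Y" by (rule minv_pd[OF pM])
  have YM: "mm n ?Y M = Idm n" and MY: "mm n M ?Y = Idm n" using pd_inv[OF pM] by auto
  have XM: "mm n ?X ?M' = Idm n" and MX: "mm n ?M' ?X = Idm n" using pd_inv[OF pM'] by auto
  have YM': "mm n ?Y ?M' = madd (Idm n) (msc (of_real \<delta>) ?Y)"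
    using sY by (simp add: mm_madd_right mm_msc_right mm_Idm_right YM)
  have M'Y: "mm n ?M' ?Y = madd (Idm n) (msc (of_real \<delta>) ?Y)"
    using sY by (simp add: mm_madd_left mm_msc_left mm_Idm_left MY)
  have "?Y = mm n ?Y (mm n ?M' ?X)" using sY by (simp add: MX mm_Idm_right)
  also have "\<dots> = mm n (mm n ?Y ?M') ?X" by (simp add: mm_assoc)
  also have "\<dots> = madd ?X (msc (of_real \<delta>) (mm n ?Y ?X))"
    using sX by (simp add: YM' mm_madd_left mm_msc_left mm_Idm_left)
  finally have id1: "?Y = madd ?X (msc (of_real \<delta>) (mm n ?Y ?X))" .
  have "mm n ?Y ?X = mm n (mm n ?X ?M') (mm n ?Y ?X)" by (simp add: XM mm_Idm_left)
  also have "\<dots> = mm n ?X (mm n (mm n ?M' ?Y) ?X)" by (simp add: mm_assoc)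
  also have "\<dots> = madd (mm n ?X ?X) (msc (of_real \<delta>) (mm n ?X (mm n ?Y ?X)))"
    using sX by (simp only: M'Y) (simp add: mm_madd_left mm_madd_right mm_msc_left mm_msc_right mm_Idm_left)
  finally have id2: "mm n ?Y ?X = madd (mm n ?X ?X) (msc (of_real \<delta>) (mm n ?X (mm n ?Y ?X)))" .
  have t1: "Re (tr n ?Y) - Re (tr n ?X) = \<delta> * Re (tr n (mm n ?Y ?X))"
    using arg_cong[OF id1, of "\<lambda>A. Re (tr n A)"] by (simp add: tr_madd tr_msc)
  have T: "Re (tr n (mm n ?X (mm n ?Y ?X))) \<ge> 0" by (rule tr_cong_nonneg[OF hX pY])
  have t2: "Re (tr n (mm n ?Y ?X)) = Re (tr n (mm n ?X ?X)) + \<delta> * Re (tr n (mm n ?X (mm n ?Y ?X)))"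
    using arg_cong[OF id2, of "\<lambda>A. Re (tr n A)"] by (simp add: tr_madd tr_msc)
  have sq: "Re (tr n (mm n ?X ?X)) > 0" by (rule minv_sq_pos[OF pM' n])
  have ge: "Re (tr n (mm n ?Y ?X)) \<ge> Re (tr n (mm n ?X ?X))" using t2 T d by simp
  show "Re (tr n ?Y) - Re (tr n ?X) > 0" using t1 ge sq d by (simp add: mult_pos_pos)
  show "\<delta> * Re (tr n (mm n ?X ?X)) \<le> Re (tr n ?Y) - Re (tr n ?X)"
    using t1 ge d by (simp add: mult_left_mono)
qed

lemma ip_le_tr_qf: assumes pN: "pd n N"
  shows "Re (ip n x x) \<le> Re (tr n (minv n N)) * Re (qf n N x)"
proof -
  let ?Y = "minv n N"
  let ?z = "mv n N x"
  have pY: "pd n ?Y" by (rule minv_pd[OF pN])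
  have xx: "ip n x x = ip n (mv n ?Y ?z) (mv n ?Y ?z)"
    by (rule ip_cong) (auto simp: mv_inv_cancel2[OF pN])
  have qz: "Re (qf n ?Y ?z) = Re (qf n N x)"
  proof -
    have "qf n ?Y ?z = qf n N (mv n ?Y ?z)" by (rule qf_minv[OF pN])
    also have "\<dots> = qf n N x" by (rule qf_cong) (simp add: mv_inv_cancel2[OF pN])
    finally show ?thesis by simp
  qed
  have "Re (ip n x x) = (\<Sum>i<n. (cmod (mv n ?Y ?z i))^2)"
    by (subst xx) (simp only: ip_self Re_complex_of_real)
  also have "\<dots> \<le> (\<Sum>i<n. Re (?Y i i) * Re (qf n ?Y ?z))"
  proof (rule sum_mono)
    fix i assume i: "i \<in> {..<n}"
    let ?e = "\<lambda>k. if k = i then (1::complex) else 0"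
    have "ip n ?e (mv n ?Y ?z) = mv n ?Y ?z i"
    proof -
      have "ip n ?e (mv n ?Y ?z) = (\<Sum>k<n. if k = i then mv n ?Y ?z i else 0)"
        unfolding ip_def by (rule sum.cong) auto
      then show ?thesis using i by simp
    qed
    then have "(cmod (mv n ?Y ?z i))^2 \<le> Re (qf n ?Y ?e) * Re (qf n ?Y ?z)"
      using pd_cs[OF pY, of ?e ?z] by simp
    then show "(cmod (mv n ?Y ?z i))^2 \<le> Re (?Y i i) * Re (qf n ?Y ?z)"
      using unit_qf[of i n ?Y] i by simp
  qed
  also have "\<dots> = Re (tr n ?Y) * Re (qf n N x)" by (simp add: tr_def sum_distrib_right qz)
  finally show ?thesis .
qed

lemma low_pd: assumes pN: "pd n N" and d: "\<delta> \<ge> 0" and t: "\<delta> * Re (tr n (minv n N)) < 1"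
  shows "pd n (madd N (msc (of_real (- \<delta>)) (Idm n)))"
  unfolding pd_def
proof (intro conjI allI impI)
  show "herm n (madd N (msc (of_real (- \<delta>)) (Idm n)))"
    using pN by (intro herm_madd herm_msc herm_Idm) (auto simp: pd_def)
  fix x assume x: "nz n x"
  have q: "Re (qf n N x) > 0" using pN x by (simp add: pd_def)
  have "Re (qf n (madd N (msc (of_real (- \<delta>)) (Idm n))) x) = Re (qf n N x) - \<delta> * Re (ip n x x)"
    by (simp add: qf_madd qf_msc qf_Idm)
  moreover have "\<delta> * Re (ip n x x) \<le> \<delta> * (Re (tr n (minv n N)) * Re (qf n N x))"
    using ip_le_tr_qf[OF pN, of x] d by (simp add: mult_left_mono)
  moreover have "\<delta> * (Re (tr n (minv n N)) * Re (qf n N x)) < Re (qf n N x)"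
  proof -
    have "(\<delta> * Re (tr n (minv n N))) * Re (qf n N x) < 1 * Re (qf n N x)"
      using t q by (intro mult_strict_right_mono) auto
    then show ?thesis by (simp add: mult.assoc)
  qed
  ultimately show "Re (qf n (madd N (msc (of_real (- \<delta>)) (Idm n))) x) > 0" by linarith
qed

lemma low_facts:
  assumes pN: "pd n N" and d: "\<delta> > 0" and n: "0 < n" and t: "\<delta> * Re (tr n (minv n N)) < 1"
  shows "Re (tr n (minv n (madd N (msc (of_real (- \<delta>)) (Idm n))))) - Re (tr n (minv n N)) > 0"
    and "Re (tr n (mm n (minv n (madd N (msc (of_real (- \<delta>)) (Idm n)))) (minv n (madd N (msc (of_real (- \<delta>)) (Idm n))))))
          / (Re (tr n (minv n (madd N (msc (of_real (- \<delta>)) (Idm n))))) - Re (tr n (minv n N)))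
          - Re (tr n (minv n (madd N (msc (of_real (- \<delta>)) (Idm n))))) \<ge> 1 / \<delta> - Re (tr n (minv n N))"
proof -
  let ?N' = "madd N (msc (of_real (- \<delta>)) (Idm n))"
  let ?Y = "minv n N" and ?X = "minv n ?N'"
  have pN': "pd n ?N'" by (rule low_pd[OF pN _ t]) (use d in simp)
  have sY: "supp n ?Y" and sX: "supp n ?X" using pd_inv[OF pN] pd_inv[OF pN'] by auto
  have sN: "supp n N" using pN by (simp add: pd_def herm_def)
  have hX: "herm n ?X" by (rule minv_herm[OF pN'])
  have hY: "herm n ?Y" by (rule minv_herm[OF pN])
  have pY: "pd n ?Y" by (rule minv_pd[OF pN])
  have pX: "pd n ?X" by (rule minv_pd[OF pN'])
  have YN: "mm n ?Y N = Idm n" and NY: "mm n N ?Y = Idm n" using pd_inv[OF pN] by auto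
  have XN': "mm n ?X ?N' = Idm n" and N'X: "mm n ?N' ?X = Idm n" using pd_inv[OF pN'] by auto
  have NN: "N = madd ?N' (msc (of_real \<delta>) (Idm n))" using shift_back[OF sN] by simp
  have XN: "mm n ?X N = madd (Idm n) (msc (of_real \<delta>) ?X)"
  proof -
    have "mm n ?X N = mm n ?X (madd ?N' (msc (of_real \<delta>) (Idm n)))" by (rule arg_cong[where f="mm n ?X"], rule NN)
    also have "\<dots> = madd (mm n ?X ?N') (mm n ?X (msc (of_real \<delta>) (Idm n)))" by (rule mm_madd_right)
    finally show ?thesis using sX by (simp add: mm_msc_right mm_Idm_right XN'[simplified])
  qed
  have NX: "mm n N ?X = madd (Idm n) (msc (of_real \<delta>) ?X)"
  proof -
    have "mm n N ?X = mm n (madd ?N' (msc (of_real \<delta>) (Idm n))) ?X" by (rule arg_cong[where f="\<lambda>A. mm n A ?X"], rule NN)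
    also have "\<dots> = madd (mm n ?N' ?X) (mm n (msc (of_real \<delta>) (Idm n)) ?X)" by (rule mm_madd_left)
    finally show ?thesis using sX by (simp add: mm_msc_left mm_Idm_left N'X[simplified])
  qed
  have "?X = mm n ?X (mm n N ?Y)" using sX by (simp add: NY mm_Idm_right)
  also have "\<dots> = mm n (mm n ?X N) ?Y" by (simp add: mm_assoc)
  also have "\<dots> = madd ?Y (msc (of_real \<delta>) (mm n ?X ?Y))"
    using sY by (simp only: XN) (simp add: mm_madd_left mm_msc_left mm_Idm_left)
  finally have id1: "?X = madd ?Y (msc (of_real \<delta>) (mm n ?X ?Y))" .
  have "mm n ?X ?Y = mm n (mm n ?Y N) (mm n ?X ?Y)" by (simp add: YN mm_Idm_left)
  also have "\<dots> = mm n ?Y (mm n (mm n N ?X) ?Y)" by (simp add: mm_assoc)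
  also have "\<dots> = madd (mm n ?Y ?Y) (msc (of_real \<delta>) (mm n ?Y (mm n ?X ?Y)))"
    using sY by (simp only: NX) (simp add: mm_madd_left mm_madd_right mm_msc_left mm_msc_right mm_Idm_left)
  finally have id2: "mm n ?X ?Y = madd (mm n ?Y ?Y) (msc (of_real \<delta>) (mm n ?Y (mm n ?X ?Y)))" .
  have "mm n ?X (madd ?Y (msc (of_real \<delta>) (mm n ?X ?Y))) = mm n ?X ?X" by (simp only: id1[symmetric])
  then have id3: "mm n ?X ?X = madd (mm n ?X ?Y) (msc (of_real \<delta>) (mm n ?X (mm n ?X ?Y)))"
    by (simp add: mm_madd_right mm_msc_right)
  define a where "a = Re (tr n (mm n ?X ?Y))"
  define T where "T = Re (tr n (mm n ?X (mm n ?Y ?X)))"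
  define c where "c = Re (tr n ?Y)"
  have t1: "Re (tr n ?X) - c = \<delta> * a"
    using arg_cong[OF id1, of "\<lambda>A. Re (tr n A)"] by (simp add: tr_madd tr_msc a_def c_def)
  have "Re (tr n (mm n ?Y (mm n ?X ?Y))) \<ge> 0" by (rule tr_cong_nonneg[OF hY pX])
  moreover have "Re (tr n (mm n ?Y ?Y)) > 0" by (rule minv_sq_pos[OF pN n])
  moreover have "a = Re (tr n (mm n ?Y ?Y)) + \<delta> * Re (tr n (mm n ?Y (mm n ?X ?Y)))"
    using arg_cong[OF id2, of "\<lambda>A. Re (tr n A)"] by (simp add: tr_madd tr_msc a_def)
  ultimately have ap: "a > 0" using d by (smt (verit) mult_nonneg_nonneg)
  have TT: "tr n (mm n ?X (mm n ?X ?Y)) = tr n (mm n ?X (mm n ?Y ?X))"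
    by (metis tr_mm_comm mm_assoc)
  have t3: "Re (tr n (mm n ?X ?X)) = a + \<delta> * T"
    using arg_cong[OF id3, of "\<lambda>A. Re (tr n A)"] by (simp add: tr_madd tr_msc a_def T_def TT[simplified])
  have T0: "T \<ge> 0" unfolding T_def by (rule tr_cong_nonneg[OF hX pY])
  have cs: "a^2 \<le> T * c" unfolding a_def T_def c_def by (rule tr_cs[OF hX pY n])
  have dc: "\<delta> * c < 1" using t by (simp add: c_def)
  have key: "\<delta> * a^2 \<le> T"
  proof -
    have "\<delta> * a^2 \<le> \<delta> * (T * c)" using cs d by (simp add: mult_left_mono)
    also have "\<dots> = T * (\<delta> * c)" by simp
    also have "\<dots> \<le> T * 1" using T0 dc by (intro mult_left_mono) auto
    finally show ?thesis by simp
  qed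
  show "Re (tr n ?X) - Re (tr n ?Y) > 0" using t1 ap d by (simp add: c_def)
  have "Re (tr n (mm n ?X ?X)) / (Re (tr n ?X) - Re (tr n ?Y)) - Re (tr n ?X) = 1 / \<delta> + T / a - c - \<delta> * a"
    using t1 t3 ap d by (simp add: c_def field_simps)
  also have "T / a \<ge> \<delta> * a" using key ap by (simp add: field_simps power2_eq_square)
  then have "1 / \<delta> + T / a - c - \<delta> * a \<ge> 1 / \<delta> - c" by simp
  finally show "Re (tr n (mm n ?X ?X)) / (Re (tr n ?X) - Re (tr n ?Y)) - Re (tr n ?X) \<ge> 1 / \<delta> - Re (tr n ?Y)"
    by (simp add: c_def)
qed

definition Mu :: "nat \<Rightarrow> real \<Rightarrow> cmat \<Rightarrow> cmat" where
  "Mu n u A = madd (msc (of_real u) (Idm n)) (msc (-1) A)"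
definition Nl :: "nat \<Rightarrow> real \<Rightarrow> cmat \<Rightarrow> cmat" where
  "Nl n l A = madd A (msc (of_real (- l)) (Idm n))"

definition good :: "nat \<Rightarrow> real \<Rightarrow> real \<Rightarrow> cmat \<Rightarrow> bool" where
  "good n u l A \<longleftrightarrow> herm n A \<and> pd n (Mu n u A) \<and> pd n (Nl n l A) \<and>
     Re (tr n (minv n (Mu n u A))) \<le> 1/8 \<and> Re (tr n (minv n (Nl n l A))) \<le> 1/2"

definition XU where "XU n u A = minv n (Mu n (u + 4) A)"
definition DU where "DU n u A = Re (tr n (minv n (Mu n u A))) - Re (tr n (XU n u A))"
definition ZU where "ZU n u A = madd (msc (of_real (1 / DU n u A)) (mm n (XU n u A) (XU n u A))) (XU n u A)"
definition XL where "XL n l A = minv n (Nl n (l + 1) A)"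
definition DL where "DL n l A = Re (tr n (XL n l A)) - Re (tr n (minv n (Nl n l A)))"
definition ZL where "ZL n l A = madd (msc (of_real (1 / DL n l A)) (mm n (XL n l A) (XL n l A))) (msc (-1) (XL n l A))"

lemma Mu_shift: "Mu n (u + \<delta>) A = madd (Mu n u A) (msc (of_real \<delta>) (Idm n))"
  by (auto simp: Mu_def madd_def msc_def fun_eq_iff algebra_simps)
lemma Nl_shift: "Nl n (l + \<delta>) A = madd (Nl n l A) (msc (of_real (- \<delta>)) (Idm n))"
  by (auto simp: Nl_def madd_def msc_def fun_eq_iff algebra_simps)
lemma Mu_upd: "Mu n u (madd A (msc (of_real t) P)) = madd (Mu n u A) (msc (of_real (- t)) P)"
  by (auto simp: Mu_def madd_def msc_def fun_eq_iff algebra_simps)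
lemma Nl_upd: "Nl n l (madd A (msc (of_real t) P)) = madd (Nl n l A) (msc (of_real t) P)"
  by (auto simp: Nl_def madd_def msc_def fun_eq_iff algebra_simps)

lemma qf_sq_nonneg: "herm n X \<Longrightarrow> Re (qf n (mm n X X) y) \<ge> 0"
  by (simp add: herm_def qf_mm ip_self_nonneg)

lemma qf_ZU: "Re (qf n (ZU n u A) y) = Re (qf n (mm n (XU n u A) (XU n u A)) y) / DU n u A + Re (qf n (XU n u A) y)"
  by (simp add: ZU_def qf_madd qf_msc)
lemma qf_ZL: "Re (qf n (ZL n l A) y) = Re (qf n (mm n (XL n l A) (XL n l A)) y) / DL n l A - Re (qf n (XL n l A) y)"
  by (simp add: ZL_def qf_madd qf_msc)
lemma tr_ZU: "Re (tr n (ZU n u A)) = Re (tr n (mm n (XU n u A) (XU n u A))) / DU n u A + Re (tr n (XU n u A))"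
  by (simp add: ZU_def tr_madd tr_msc)
lemma tr_ZL: "Re (tr n (ZL n l A)) = Re (tr n (mm n (XL n l A) (XL n l A))) / DL n l A - Re (tr n (XL n l A))"
  by (simp add: ZL_def tr_madd tr_msc)

lemma avg_bounds: assumes g: "good n u l A" and n: "0 < n"
  shows "Re (tr n (ZU n u A)) \<le> 3/8" and "Re (tr n (ZL n l A)) \<ge> 1/2"
proof -
  have pM: "pd n (Mu n u A)" and pN: "pd n (Nl n l A)"
    and tU: "Re (tr n (minv n (Mu n u A))) \<le> 1/8" and tL: "Re (tr n (minv n (Nl n l A))) \<le> 1/2"
    using g by (auto simp: good_def)
  note uf = up_facts[OF pM, of 4, simplified, OF n]
  have D: "DU n u A > 0" using uf(2) by (simp add: DU_def XU_def Mu_shift)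
  have sq: "4 * Re (tr n (mm n (XU n u A) (XU n u A))) \<le> DU n u A"
    using uf(3) by (simp add: DU_def XU_def Mu_shift)
  have "Re (tr n (mm n (XU n u A) (XU n u A))) / DU n u A \<le> 1/4" using D sq by (simp add: field_simps)
  moreover have "Re (tr n (XU n u A)) \<le> 1/8" using D tU by (simp add: DU_def)
  ultimately show "Re (tr n (ZU n u A)) \<le> 3/8" unfolding tr_ZU by linarith
  have t1: "1 * Re (tr n (minv n (Nl n l A))) < 1" using tL by simp
  note lf = low_facts[OF pN _ n t1, simplified]
  have "Re (tr n (ZL n l A)) \<ge> 1 - Re (tr n (minv n (Nl n l A)))"
    using lf(2) by (simp add: tr_ZL DL_def XL_def Nl_shift)
  then show "Re (tr n (ZL n l A)) \<ge> 1/2" using tL by simp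
qed

lemma bss_step:
  assumes g: "good n u l A" and n: "0 < n"
    and LU: "Re (qf n (ZU n u A) y) < Re (qf n (ZL n l A) y)"
  shows "1 / Re (qf n (ZL n l A) y) > 0"
    and "good n (u + 4) (l + 1) (madd A (msc (of_real (1 / Re (qf n (ZL n l A) y))) (outer n y y)))"
proof -
  define L where "L = Re (qf n (ZL n l A) y)"
  define t where "t = 1 / L"
  let ?P = "outer n y y"
  have pM: "pd n (Mu n u A)" and pN: "pd n (Nl n l A)" and hA: "herm n A"
    and tU: "Re (tr n (minv n (Mu n u A))) \<le> 1/8" and tL: "Re (tr n (minv n (Nl n l A))) \<le> 1/2"
    using g by (auto simp: good_def)
  note uf = up_facts[OF pM, of 4, simplified, OF n]
  have pM': "pd n (Mu n (u + 4) A)" using uf(1) by (simp add: Mu_shift)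
  have DU: "DU n u A > 0" using uf(2) by (simp add: DU_def XU_def Mu_shift)
  have t1: "1 * Re (tr n (minv n (Nl n l A))) < 1" using tL by simp
  note lf = low_facts[OF pN _ n t1, simplified]
  have pN': "pd n (Nl n (l + 1) A)" using low_pd[OF pN _ t1] by (simp add: Nl_shift)
  have DL: "DL n l A > 0" using lf(1) by (simp add: DL_def XL_def Nl_shift)
  define q1u where "q1u = Re (qf n (XU n u A) y)"
  define q2u where "q2u = Re (qf n (mm n (XU n u A) (XU n u A)) y)"
  define q1l where "q1l = Re (qf n (XL n l A) y)"
  define q2l where "q2l = Re (qf n (mm n (XL n l A) (XL n l A)) y)"
  have q1u0: "q1u \<ge> 0" unfolding q1u_def XU_def by (rule pd_qf_nonneg[OF minv_pd[OF pM']])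
  have q2u0: "q2u \<ge> 0" unfolding q2u_def XU_def by (rule qf_sq_nonneg[OF minv_herm[OF pM']])
  have q1l0: "q1l \<ge> 0" unfolding q1l_def XL_def by (rule pd_qf_nonneg[OF minv_pd[OF pN']])
  have Ueq: "Re (qf n (ZU n u A) y) = q2u / DU n u A + q1u" by (simp add: qf_ZU q1u_def q2u_def)
  have Leq: "L = q2l / DL n l A - q1l" by (simp add: L_def qf_ZL q1l_def q2l_def)
  have U0: "q2u / DU n u A \<ge> 0" using q2u0 DU by simp
  have LUu: "q2u / DU n u A + q1u < L" using LU Ueq by (simp add: L_def)
  have Lp: "L > 0" using LUu U0 q1u0 by linarith
  show "1 / Re (qf n (ZL n l A) y) > 0" using Lp by (simp add: L_def)
  have tp: "t > 0" using Lp by (simp add: t_def)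
  have hA': "herm n (madd A (msc (of_real t) ?P))"
    by (intro herm_madd herm_msc hA herm_outer) auto
  have cu: "1 + (- t) * q1u > 0"
  proof -
    have "q1u < L" using LUu U0 by linarith
    then have "t * q1u < t * L" using tp by simp
    also have "t * L = 1" using Lp by (simp add: t_def)
    finally show ?thesis by simp
  qed
  have cu': "1 + (- t) * Re (qf n (minv n (Mu n (u + 4) A)) y) > 0" using cu by (simp add: q1u_def XU_def)
  have pU: "pd n (Mu n (u + 4) (madd A (msc (of_real t) ?P)))"
    using sherman_morrison_pd[OF pM' cu'] by (simp add: Mu_upd)
  have trU: "Re (tr n (minv n (Mu n (u + 4) (madd A (msc (of_real t) ?P))))) =
      Re (tr n (XU n u A)) + t * q2u / (1 - t * q1u)"
    using sherman_morrison_tr[OF pM' cu'] by (simp add: Mu_upd XU_def q1u_def q2u_def)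
  have "t * q2u / (1 - t * q1u) \<le> DU n u A"
  proof -
    have "q2u \<le> DU n u A * (L - q1u)" using LUu DU by (simp add: field_simps)
    then have "t * q2u \<le> t * (DU n u A * (L - q1u))" using tp by (simp add: mult_left_mono)
    also have "\<dots> = DU n u A * (1 - t * q1u)" using Lp by (simp add: t_def field_simps)
    finally show ?thesis using cu by (simp add: field_simps)
  qed
  then have trU': "Re (tr n (minv n (Mu n (u + 4) (madd A (msc (of_real t) ?P))))) \<le> 1/8"
    using trU tU unfolding DU_def by linarith
  have cl: "1 + t * q1l > 0" using tp q1l0 by (simp add: add_pos_nonneg)
  have cl': "1 + t * Re (qf n (minv n (Nl n (l + 1) A)) y) > 0" using cl by (simp add: q1l_def XL_def)
  have pL: "pd n (Nl n (l + 1) (madd A (msc (of_real t) ?P)))"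
    using sherman_morrison_pd[OF pN' cl'] by (simp add: Nl_upd)
  have trL: "Re (tr n (minv n (Nl n (l + 1) (madd A (msc (of_real t) ?P))))) =
      Re (tr n (XL n l A)) - t * q2l / (1 + t * q1l)"
    using sherman_morrison_tr[OF pN' cl'] by (simp add: Nl_upd XL_def q1l_def q2l_def)
  have "t * q2l / (1 + t * q1l) \<ge> DL n l A"
  proof -
    have "q2l = DL n l A * (L + q1l)" using Leq DL by (simp add: field_simps)
    then have "t * q2l = DL n l A * (1 + t * q1l)" using Lp by (simp add: t_def field_simps)
    then show ?thesis using cl by (simp add: field_simps)
  qed
  then have trL': "Re (tr n (minv n (Nl n (l + 1) (madd A (msc (of_real t) ?P))))) \<le> 1/2"
    using trL tL unfolding DL_def by linarith
  show "good n (u + 4) (l + 1) (madd A (msc (of_real (1 / Re (qf n (ZL n l A) y))) ?P))"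
    using hA' pU pL trU' trL' by (simp add: good_def t_def L_def)
qed

definition L2 :: "'a measure \<Rightarrow> ('a \<Rightarrow> complex) \<Rightarrow> bool" where
  "L2 M f \<longleftrightarrow> f \<in> borel_measurable M \<and> integrable M (\<lambda>x. (cmod (f x))^2)"

lemma L2_prod_int: assumes "L2 M f" "L2 M g" shows "integrable M (\<lambda>x. f x * cnj (g x))"
proof (rule Bochner_Integration.integrable_bound)
  show "integrable M (\<lambda>x. (cmod (f x))^2 + (cmod (g x))^2)"
    using assms by (auto simp: L2_def)
  have "(\<lambda>x. cnj (g x)) \<in> borel_measurable M"
    using assms by (intro borel_measurable_continuous_on[OF linear_continuous_on[OF bounded_linear_cnj]]) (auto simp: L2_def)
  then show "(\<lambda>x. f x * cnj (g x)) \<in> borel_measurable M" using assms by (auto simp: L2_def)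
  show "AE x in M. norm (f x * cnj (g x)) \<le> norm ((cmod (f x))^2 + (cmod (g x))^2)"
  proof (intro AE_I2)
    fix x
    have "cmod (f x) * cmod (g x) \<le> (cmod (f x))^2 + (cmod (g x))^2"
    proof -
      have a: "0 \<le> (cmod (f x) - cmod (g x))^2" by simp
      have b: "0 \<le> cmod (f x) * cmod (g x)" by simp
      have "2 * (cmod (f x) * cmod (g x)) \<le> (cmod (f x))^2 + (cmod (g x))^2"
        using a unfolding power2_eq_square by (simp add: algebra_simps)
      then show ?thesis using b by linarith
    qed
    then show "norm (f x * cnj (g x)) \<le> norm ((cmod (f x))^2 + (cmod (g x))^2)"
      by (simp add: norm_mult)
  qed
qed

lemma qf_expand: "qf n Z y = (\<Sum>i<n. \<Sum>j<n. Z i j * (y j * cnj (y i)))"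
proof -
  have "qf n Z y = (\<Sum>i<n. \<Sum>j<n. cnj (y i) * (Z i j * y j))"
    by (simp add: qf_def ip_def mv_def sum_distrib_left)
  also have "\<dots> = (\<Sum>i<n. \<Sum>j<n. Z i j * (y j * cnj (y i)))"
    by (intro sum.cong refl) (simp add: mult_ac)
  finally show ?thesis .
qed

lemma int_qf:
  assumes L: "\<And>k. k < n \<Longrightarrow> L2 M (e k)"
    and orth: "\<And>i j. i < n \<Longrightarrow> j < n \<Longrightarrow> (\<integral>x. e j x * cnj (e i x) \<partial>M) = (if i = j then 1 else 0)"
  shows "integrable M (\<lambda>x. qf n Z (\<lambda>k. e k x))" and "(\<integral>x. qf n Z (\<lambda>k. e k x) \<partial>M) = tr n Z"
proof -
  have ii: "\<And>i j. i < n \<Longrightarrow> j < n \<Longrightarrow> integrable M (\<lambda>x. Z i j * (e j x * cnj (e i x)))"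
    by (rule integrable_mult_right, rule L2_prod_int[OF L L])
  show "integrable M (\<lambda>x. qf n Z (\<lambda>k. e k x))" unfolding qf_expand
    by (intro Bochner_Integration.integrable_sum) (simp add: ii)
  have "(\<integral>x. qf n Z (\<lambda>k. e k x) \<partial>M) = (\<integral>x. (\<Sum>i<n. \<Sum>j<n. Z i j * (e j x * cnj (e i x))) \<partial>M)"
    by (simp only: qf_expand)
  also have "\<dots> = (\<Sum>i<n. (\<integral>x. (\<Sum>j<n. Z i j * (e j x * cnj (e i x))) \<partial>M))"
    by (rule Bochner_Integration.integral_sum) (intro Bochner_Integration.integrable_sum, simp add: ii)
  also have "\<dots> = (\<Sum>i<n. \<Sum>j<n. (\<integral>x. Z i j * (e j x * cnj (e i x)) \<partial>M))"
    by (intro sum.cong refl Bochner_Integration.integral_sum) (simp add: ii)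
  also have "\<dots> = (\<Sum>i<n. \<Sum>j<n. Z i j * (\<integral>x. e j x * cnj (e i x) \<partial>M))"
    by simp
  also have "\<dots> = (\<Sum>i<n. \<Sum>j<n. if j = i then Z i i else 0)"
    by (intro sum.cong refl) (auto simp: orth)
  also have "\<dots> = tr n Z" by (simp add: tr_def)
  finally show "(\<integral>x. qf n Z (\<lambda>k. e k x) \<partial>M) = tr n Z" .
qed

lemma AE_ex_point: assumes "prob_space M" "AE x in M. P x" shows "\<exists>x\<in>space M. P x"
proof (rule ccontr)
  assume "\<not> (\<exists>x\<in>space M. P x)"
  then have "AE x in M. P x \<longrightarrow> False" by (intro AE_I2) auto
  then have "AE x in M. False" by (rule AE_mp[OF assms(2)])
  then show False using prob_space.AE_False[OF assms(1)] by simp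
qed

lemma msc_msc: "msc a (msc b A) = msc (a * b) A" by (simp add: msc_def fun_eq_iff)

lemma good_base: assumes n: "0 < n"
  shows "good n (8 * real n) (- 2 * real n) (\<lambda>_ _. 0)"
proof -
  have Mu0: "Mu n u (\<lambda>_ _. 0) = msc (of_real u) (Idm n)" for u
    by (auto simp: Mu_def madd_def msc_def fun_eq_iff)
  have Nl0: "Nl n l (\<lambda>_ _. 0) = msc (of_real (- l)) (Idm n)" for l
    by (auto simp: Nl_def madd_def msc_def fun_eq_iff)
  have pdI: "pd n (msc (of_real c) (Idm n))" if c: "c > 0" for c
    unfolding pd_def using c by (auto simp: herm_msc qf_msc qf_Idm ip_self_pos)
  have invI: "minv n (msc (of_real c) (Idm n)) = msc (of_real (1/c)) (Idm n)" if c: "c > 0" for c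
  proof (rule minv_unique[OF pdI[OF c]])
    show "supp n (msc (of_real (1/c)) (Idm n))" by simp
    have "mm n (msc (of_real c) (Idm n)) (msc (of_real (1/c)) (Idm n)) = msc (of_real c * of_real (1/c)) (Idm n)"
      by (simp add: mm_msc_left mm_msc_right mm_Idm_left msc_msc)
    also have "\<dots> = Idm n" using c by (simp add: msc_def fun_eq_iff)
    finally show "mm n (msc (of_real c) (Idm n)) (msc (of_real (1/c)) (Idm n)) = Idm n" .
  qed
  have i1: "minv n (Mu n (8 * real n) (\<lambda>_ _. 0)) = msc (of_real (1 / (8 * real n))) (Idm n)"
    unfolding Mu0 by (rule invI) (use n in simp)
  have i2: "minv n (Nl n (- 2 * real n) (\<lambda>_ _. 0)) = msc (of_real (1 / (- (- 2 * real n)))) (Idm n)"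
    unfolding Nl0 by (rule invI) (use n in simp)
  have 1: "Re (tr n (minv n (Mu n (8 * real n) (\<lambda>_ _. 0)))) = 1/8"
    unfolding i1 tr_msc tr_Idm using n by simp
  have 2: "Re (tr n (minv n (Nl n (- 2 * real n) (\<lambda>_ _. 0)))) = 1/2"
    unfolding i2 tr_msc tr_Idm using n by simp
  have h0: "herm n (\<lambda>_ _. 0)" by (simp add: herm_def supp_def adj_def fun_eq_iff)
  have p1: "pd n (Mu n (8 * real n) (\<lambda>_ _. 0))" unfolding Mu0 by (rule pdI) (use n in simp)
  have p2: "pd n (Nl n (- 2 * real n) (\<lambda>_ _. 0))" unfolding Nl0 by (rule pdI) (use n in simp)
  show ?thesis unfolding good_def by (intro conjI h0 p1 p2) (use 1 2 in linarith)+
qed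

lemma bss_iter:
  fixes M :: "'a measure" and e :: "nat \<Rightarrow> 'a \<Rightarrow> complex"
  assumes ps: "prob_space M" and n: "0 < n"
    and L: "\<And>k. k < n \<Longrightarrow> L2 M (e k)"
    and orth: "\<And>i j. i < n \<Longrightarrow> j < n \<Longrightarrow> (\<integral>x. e j x * cnj (e i x) \<partial>M) = (if i = j then 1 else 0)"
    and P: "AE x in M. P x"
  shows "\<exists>\<xi> w A. (\<forall>\<nu><q. \<xi> \<nu> \<in> space M \<and> P (\<xi> \<nu>) \<and> w \<nu> > 0) \<and>
      good n (8 * real n + 4 * real q) (- 2 * real n + real q) A \<and>
      (\<forall>y. qf n A y = (\<Sum>\<nu><q. of_real (w \<nu>) * qf n (outer n (\<lambda>k. e k (\<xi> \<nu>)) (\<lambda>k. e k (\<xi> \<nu>))) y))"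
proof (induction q)
  case 0
  have "qf n (\<lambda>_ _. 0) y = 0" for y by (simp add: qf_def ip_def mv_def)
  then show ?case using good_base[OF n] by (intro exI[of _ undefined] exI[of _ "\<lambda>_ _. 0"]) simp
next
  case (Suc q)
  then obtain \<xi> w A where IH: "\<forall>\<nu><q. \<xi> \<nu> \<in> space M \<and> P (\<xi> \<nu>) \<and> w \<nu> > 0"
    "good n (8 * real n + 4 * real q) (- 2 * real n + real q) A"
    "\<forall>y. qf n A y = (\<Sum>\<nu><q. of_real (w \<nu>) * qf n (outer n (\<lambda>k. e k (\<xi> \<nu>)) (\<lambda>k. e k (\<xi> \<nu>))) y)"
    by blast
  define u where "u = 8 * real n + 4 * real q"
  define l where "l = - 2 * real n + real q"
  have g: "good n u l A" using IH(2) by (simp add: u_def l_def)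
  have "\<exists>x\<in>space M. P x \<and> Re (qf n (ZU n u A) (\<lambda>k. e k x)) < Re (qf n (ZL n l A) (\<lambda>k. e k x))"
  proof (rule ccontr)
    assume c: "\<not> ?thesis"
    have "AE x in M. P x \<longrightarrow> Re (qf n (ZL n l A) (\<lambda>k. e k x)) \<le> Re (qf n (ZU n u A) (\<lambda>k. e k x))"
      by (rule AE_I2) (use c in auto)
    then have ae: "AE x in M. Re (qf n (ZL n l A) (\<lambda>k. e k x)) \<le> Re (qf n (ZU n u A) (\<lambda>k. e k x))"
      by (rule AE_mp[OF P])
    have "(\<integral>x. Re (qf n (ZL n l A) (\<lambda>k. e k x)) \<partial>M) \<le> (\<integral>x. Re (qf n (ZU n u A) (\<lambda>k. e k x)) \<partial>M)"
      by (rule integral_mono_AE[OF _ _ ae]) (auto intro: int_qf(1)[OF L orth])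
    moreover have "(\<integral>x. Re (qf n Z (\<lambda>k. e k x)) \<partial>M) = Re (tr n Z)" for Z
      using integral_Re[OF int_qf(1)[OF L orth, where Z=Z]] int_qf(2)[OF L orth, where Z=Z] by simp
    ultimately have "Re (tr n (ZL n l A)) \<le> Re (tr n (ZU n u A))" by simp
    with avg_bounds[OF g n] show False by simp
  qed
  then obtain x where x: "x \<in> space M" "P x"
    and lu: "Re (qf n (ZU n u A) (\<lambda>k. e k x)) < Re (qf n (ZL n l A) (\<lambda>k. e k x))" by blast
  note st = bss_step[OF g n lu]
  define t where "t = 1 / Re (qf n (ZL n l A) (\<lambda>k. e k x))"
  define A' where "A' = madd A (msc (of_real t) (outer n (\<lambda>k. e k x) (\<lambda>k. e k x)))"
  have g': "good n (8 * real n + 4 * real (Suc q)) (- 2 * real n + real (Suc q)) A'"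
    using st(2) by (simp add: A'_def t_def u_def l_def algebra_simps)
  show ?case
  proof (intro exI conjI allI impI)
    show "good n (8 * real n + 4 * real (Suc q)) (- 2 * real n + real (Suc q)) A'" by (rule g')
    fix \<nu> assume "\<nu> < Suc q"
    then show "(\<xi>(q := x)) \<nu> \<in> space M" "P ((\<xi>(q := x)) \<nu>)" "(w(q := t)) \<nu> > 0"
      using IH(1) x st(1) by (auto simp: t_def less_Suc_eq)
  next
    fix y
    have "qf n A' y = qf n A y + of_real t * qf n (outer n (\<lambda>k. e k x) (\<lambda>k. e k x)) y"
      by (simp add: A'_def qf_madd qf_msc)
    also have "\<dots> = (\<Sum>\<nu><Suc q. of_real ((w(q := t)) \<nu>) * qf n (outer n (\<lambda>k. e k ((\<xi>(q := x)) \<nu>)) (\<lambda>k. e k ((\<xi>(q := x)) \<nu>))) y)"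
      using IH(3) by simp
    finally show "qf n A' y = (\<Sum>\<nu><Suc q. of_real ((w(q := t)) \<nu>) * qf n (outer n (\<lambda>k. e k ((\<xi>(q := x)) \<nu>)) (\<lambda>k. e k ((\<xi>(q := x)) \<nu>))) y)" .
  qed
qed

lemma good_bounds: assumes "good n u l A"
  shows "Re (qf n A y) \<le> u * Re (ip n y y)" and "l * Re (ip n y y) \<le> Re (qf n A y)"
proof -
  have "0 \<le> Re (qf n (Mu n u A) y)" using assms by (intro pd_qf_nonneg) (simp add: good_def)
  then show "Re (qf n A y) \<le> u * Re (ip n y y)" by (simp add: Mu_def qf_madd qf_msc qf_Idm)
  have "0 \<le> Re (qf n (Nl n l A) y)" using assms by (intro pd_qf_nonneg) (simp add: good_def)
  then show "l * Re (ip n y y) \<le> Re (qf n A y)" by (simp add: Nl_def qf_madd qf_msc qf_Idm)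
qed

lemma bss_main:
  fixes M :: "'a measure" and e :: "nat \<Rightarrow> 'a \<Rightarrow> complex"
  assumes ps: "prob_space M"
    and L: "\<And>k. k < n \<Longrightarrow> L2 M (e k)"
    and orth: "\<And>i j. i < n \<Longrightarrow> j < n \<Longrightarrow> (\<integral>x. e j x * cnj (e i x) \<partial>M) = (if i = j then 1 else 0)"
    and P: "AE x in M. P x"
    and m: "4 * real n \<le> real m"
  shows "\<exists>\<xi> w. (\<forall>\<nu><m. \<xi> \<nu> \<in> space M \<and> P (\<xi> \<nu>) \<and> w \<nu> > 0) \<and>
     (\<forall>\<beta>. (\<Sum>k<n. (cmod (\<beta> k))^2) \<le> (\<Sum>\<nu><m. w \<nu> * (cmod (\<Sum>k<n. \<beta> k * e k (\<xi> \<nu>)))^2) \<and>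
           (\<Sum>\<nu><m. w \<nu> * (cmod (\<Sum>k<n. \<beta> k * e k (\<xi> \<nu>)))^2) \<le> 12 * (\<Sum>k<n. (cmod (\<beta> k))^2))"
proof (cases "n = 0")
  case True
  obtain x where x: "x \<in> space M" "P x" using AE_ex_point[OF ps P] by blast
  show ?thesis using True x by (intro exI[of _ "\<lambda>_. x"] exI[of _ "\<lambda>_. 1"]) simp
next
  case False
  then have n: "0 < n" by simp
  have mpos: "real m > 0" using m n by simp
  obtain \<xi> w A where it: "\<forall>\<nu><m. \<xi> \<nu> \<in> space M \<and> P (\<xi> \<nu>) \<and> w \<nu> > 0"
      "good n (8 * real n + 4 * real m) (- 2 * real n + real m) A"
      "\<forall>y. qf n A y = (\<Sum>\<nu><m. of_real (w \<nu>) * qf n (outer n (\<lambda>k. e k (\<xi> \<nu>)) (\<lambda>k. e k (\<xi> \<nu>))) y)"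
    using bss_iter[OF ps n L orth P, of m] by blast
  define w' where "w' = (\<lambda>\<nu>. 2 / real m * w \<nu>)"
  show ?thesis
  proof (intro exI conjI allI impI)
    fix \<nu> assume "\<nu> < m"
    then show "\<xi> \<nu> \<in> space M" "P (\<xi> \<nu>)" "w' \<nu> > 0" using it(1) mpos by (auto simp: w'_def)
  next
    fix \<beta> :: "nat \<Rightarrow> complex"
    define y where "y = (\<lambda>k. cnj (\<beta> k))"
    define B where "B = (\<Sum>k<n. (cmod (\<beta> k))^2)"
    define S where "S = (\<Sum>\<nu><m. w \<nu> * (cmod (\<Sum>k<n. \<beta> k * e k (\<xi> \<nu>)))^2)"
    have ipy: "Re (ip n y y) = B" by (simp add: ip_self y_def B_def)
    have ipe: "ip n y (\<lambda>k. e k x) = (\<Sum>k<n. \<beta> k * e k x)" for x by (simp add: ip_def y_def)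
    have qS: "Re (qf n A y) = S"
      using it(3) by (simp add: qf_outer_self ipe S_def del: of_real_power)
    have up: "S \<le> (8 * real n + 4 * real m) * B" using good_bounds(1)[OF it(2), of y] qS ipy by simp
    have lo: "(- 2 * real n + real m) * B \<le> S" using good_bounds(2)[OF it(2), of y] qS ipy by simp
    have B0: "B \<ge> 0" by (simp add: B_def sum_nonneg)
    have S': "(\<Sum>\<nu><m. w' \<nu> * (cmod (\<Sum>k<n. \<beta> k * e k (\<xi> \<nu>)))^2) = 2 / real m * S"
      by (simp add: w'_def S_def sum_distrib_left mult.assoc)
    have "real m / 2 * B \<le> (- 2 * real n + real m) * B" using m B0 by (intro mult_right_mono) auto
    with lo have "real m / 2 * B \<le> S" by linarith
    then have "B \<le> 2 / real m * S" using mpos by (simp add: field_simps)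
    then show "B \<le> (\<Sum>\<nu><m. w' \<nu> * (cmod (\<Sum>k<n. \<beta> k * e k (\<xi> \<nu>)))^2)"
      using S' by (simp add: B_def)
    have "(8 * real n + 4 * real m) * B \<le> 6 * real m * B" using m B0 by (intro mult_right_mono) auto
    with up have "S \<le> 6 * real m * B" by linarith
    then have "2 / real m * S \<le> 12 * B" using mpos by (simp add: field_simps)
    then show "(\<Sum>\<nu><m. w' \<nu> * (cmod (\<Sum>k<n. \<beta> k * e k (\<xi> \<nu>)))^2) \<le> 12 * (\<Sum>k<n. (cmod (\<beta> k))^2)"
      using S' by (simp add: B_def)
  qed
qed

lemma L2_add: assumes "L2 M f" "L2 M g" shows "L2 M (\<lambda>x. f x + g x)"
  unfolding L2_def
proof
  show "(\<lambda>x. f x + g x) \<in> borel_measurable M" using assms by (auto simp: L2_def)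
  show "integrable M (\<lambda>x. (cmod (f x + g x))^2)"
  proof (rule Bochner_Integration.integrable_bound)
    show "integrable M (\<lambda>x. 2 * (cmod (f x))^2 + 2 * (cmod (g x))^2)" using assms by (auto simp: L2_def)
    show "(\<lambda>x. (cmod (f x + g x))^2) \<in> borel_measurable M" using assms by (auto simp: L2_def)
    show "AE x in M. norm ((cmod (f x + g x))^2) \<le> norm (2 * (cmod (f x))^2 + 2 * (cmod (g x))^2)"
    proof (intro AE_I2)
      fix x
      have t: "cmod (f x + g x) \<le> cmod (f x) + cmod (g x)" by (rule norm_triangle_ineq)
      have "(cmod (f x + g x))^2 \<le> (cmod (f x) + cmod (g x))^2"
        using t by (intro power_mono) auto
      also have "\<dots> \<le> 2 * (cmod (f x))^2 + 2 * (cmod (g x))^2"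
      proof -
        have "0 \<le> (cmod (f x) - cmod (g x))^2" by simp
        then show ?thesis unfolding power2_eq_square by (simp add: algebra_simps)
      qed
      finally show "norm ((cmod (f x + g x))^2) \<le> norm (2 * (cmod (f x))^2 + 2 * (cmod (g x))^2)" by simp
    qed
  qed
qed

lemma L2_scale: assumes "L2 M f" shows "L2 M (\<lambda>x. c * f x)"
  using assms by (auto simp: L2_def norm_mult power_mult_distrib)

lemma L2_zero: "L2 M (\<lambda>x. 0)" by (simp add: L2_def)

lemma L2_sum: "finite I \<Longrightarrow> (\<And>i. i \<in> I \<Longrightarrow> L2 M (f i)) \<Longrightarrow> L2 M (\<lambda>x. \<Sum>i\<in>I. f i x)"
proof (induction I rule: finite_induct)
  case empty then show ?case by (simp add: L2_zero)
next
  case (insert a I)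
  then show ?case by (simp add: L2_add)
qed

lemma L2_diff: assumes "L2 M f" "L2 M g" shows "L2 M (\<lambda>x. f x - g x)"
  using L2_add[OF assms(1) L2_scale[OF assms(2), of "-1"]] by simp

lemma gram_schmidt:
  fixes M :: "'a measure"
  assumes "finite F" "\<And>f. f \<in> F \<Longrightarrow> L2 M f"
  shows "\<exists>n e. n \<le> card F \<and> (\<forall>k<n. L2 M (e k)) \<and>
     (\<forall>i<n. \<forall>j<n. (\<integral>x. e j x * cnj (e i x) \<partial>M) = (if i = j then 1 else 0)) \<and>
     (\<forall>f\<in>F. \<exists>b. AE x in M. f x = (\<Sum>k<n. b k * e k x))"
  using assms
proof (induction F rule: finite_induct)
  case empty
  show ?case by (intro exI[of _ 0]) auto
next
  case (insert \<phi> F)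
  have L\<phi>: "L2 M \<phi>" using insert.prems by simp
  obtain n e where n: "n \<le> card F" and Le: "\<forall>k<n. L2 M (e k)"
    and orth: "\<forall>i<n. \<forall>j<n. (\<integral>x. e j x * cnj (e i x) \<partial>M) = (if i = j then 1 else 0)"
    and rep: "\<forall>f\<in>F. \<exists>b. AE x in M. f x = (\<Sum>k<n. b k * e k x)"
    using insert.IH insert.prems by auto
  have cardI: "card (insert \<phi> F) = Suc (card F)" using insert.hyps by simp
  define c where "c k = (\<integral>x. \<phi> x * cnj (e k x) \<partial>M)" for k
  define r where "r x = \<phi> x - (\<Sum>k<n. c k * e k x)" for x
  have Lsum: "L2 M (\<lambda>x. \<Sum>k<n. c k * e k x)" by (rule L2_sum) (auto intro: L2_scale simp: Le)
  have Lr: "L2 M r" unfolding r_def by (rule L2_diff[OF L\<phi> Lsum])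
  have rorth: "(\<integral>x. r x * cnj (e j x) \<partial>M) = 0" if j: "j < n" for j
  proof -
    have pt: "r x * cnj (e j x) = \<phi> x * cnj (e j x) - (\<Sum>k<n. c k * (e k x * cnj (e j x)))" for x
      by (simp add: r_def left_diff_distrib sum_distrib_right mult.assoc)
    have i1: "integrable M (\<lambda>x. \<phi> x * cnj (e j x))" using L\<phi> Le j by (intro L2_prod_int) auto
    have i2: "integrable M (\<lambda>x. c k * (e k x * cnj (e j x)))" if "k < n" for k
      using Le j that by (intro integrable_mult_right L2_prod_int) auto
    have "(\<integral>x. r x * cnj (e j x) \<partial>M) = (\<integral>x. \<phi> x * cnj (e j x) \<partial>M) - (\<integral>x. (\<Sum>k<n. c k * (e k x * cnj (e j x))) \<partial>M)"
      unfolding pt by (rule Bochner_Integration.integral_diff[OF i1]) (intro Bochner_Integration.integrable_sum, simp add: i2)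
    also have "(\<integral>x. (\<Sum>k<n. c k * (e k x * cnj (e j x))) \<partial>M) = (\<Sum>k<n. (\<integral>x. c k * (e k x * cnj (e j x)) \<partial>M))"
      by (rule Bochner_Integration.integral_sum) (simp add: i2)
    also have "\<dots> = (\<Sum>k<n. if k = j then c j else 0)"
      by (intro sum.cong refl) (use orth j in auto)
    also have "\<dots> = c j" using j by simp
    finally show ?thesis by (simp add: c_def)
  qed
  define N2 where "N2 = (\<integral>x. (cmod (r x))^2 \<partial>M)"
  have intr: "integrable M (\<lambda>x. (cmod (r x))^2)" using Lr by (simp add: L2_def)
  have N20: "N2 \<ge> 0" by (simp add: N2_def)
  show ?case
  proof (cases "N2 = 0")
    case True
    then have "AE x in M. (cmod (r x))^2 = 0"
      using integral_nonneg_eq_0_iff_AE[OF intr] by (simp add: N2_def)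
    then have "AE x in M. \<phi> x = (\<Sum>k<n. c k * e k x)"
      by (rule AE_mp) (intro AE_I2, simp add: r_def)
    then have rep': "\<forall>f\<in>insert \<phi> F. \<exists>b. AE x in M. f x = (\<Sum>k<n. b k * e k x)" using rep by blast
    show ?thesis using n cardI Le orth rep' by (intro exI[of _ n] exI[of _ e]) auto
  next
    case False
    then have Np: "N2 > 0" using N20 by simp
    define s where "s = sqrt N2"
    have sp: "s > 0" using Np by (simp add: s_def)
    have ss: "s * s = N2" using N20 by (simp add: s_def)
    define e' where "e' = e(n := (\<lambda>x. r x / of_real s))"
    have rr: "(\<integral>x. r x * cnj (r x) \<partial>M) = of_real N2"
    proof -
      have "(\<lambda>x. r x * cnj (r x)) = (\<lambda>x. of_real ((cmod (r x))^2))"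
        by (simp add: complex_norm_square del: of_real_power)
      then show ?thesis by (simp add: N2_def del: of_real_power)
    qed
    have Le': "\<forall>k<Suc n. L2 M (e' k)"
      using Le Lr by (auto simp: e'_def less_Suc_eq intro: L2_scale[of M r "1 / of_real s", simplified])
    have orth': "(\<integral>x. e' j x * cnj (e' i x) \<partial>M) = (if i = j then 1 else 0)" if i: "i < Suc n" and j: "j < Suc n" for i j
    proof -
      consider "i < n" "j < n" | "i = n" "j < n" | "i < n" "j = n" | "i = n" "j = n" using i j by linarith
      then show ?thesis
      proof cases
        case 1 then show ?thesis using orth by (simp add: e'_def)
      next
        case 2
        have "(\<lambda>x. e' j x * cnj (e' i x)) = (\<lambda>x. cnj (r x * cnj (e j x)) / of_real s)"
          using 2 by (auto simp: e'_def fun_eq_iff mult.commute)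
        then have "(\<integral>x. e' j x * cnj (e' i x) \<partial>M) = (\<integral>x. cnj (r x * cnj (e j x)) \<partial>M) / of_real s"
          by (simp only: integral_divide_zero)
        also have "\<dots> = cnj (\<integral>x. r x * cnj (e j x) \<partial>M) / of_real s" by (rule arg_cong[where f="\<lambda>z. z / of_real s"], rule Bochner_Integration.integral_cnj)
        finally show ?thesis using 2 rorth[of j] by simp
      next
        case 3
        have "(\<lambda>x. e' j x * cnj (e' i x)) = (\<lambda>x. (r x * cnj (e i x)) / of_real s)"
          using 3 by (auto simp: e'_def fun_eq_iff)
        then show ?thesis using 3 rorth[of i] by simp
      next
        case 4
        have "(\<lambda>x. e' j x * cnj (e' i x)) = (\<lambda>x. (r x * cnj (r x)) / of_real (s * s))"
          using 4 by (auto simp: e'_def fun_eq_iff)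
        then show ?thesis using 4 rr ss sp Np by simp
      qed
    qed
    have rep': "\<forall>f\<in>insert \<phi> F. \<exists>b. AE x in M. f x = (\<Sum>k<Suc n. b k * e' k x)"
    proof
      fix f assume f: "f \<in> insert \<phi> F"
      show "\<exists>b. AE x in M. f x = (\<Sum>k<Suc n. b k * e' k x)"
      proof (cases "f = \<phi>")
        case True
        have "\<phi> x = (\<Sum>k<Suc n. (c(n := of_real s)) k * e' k x)" for x
        proof -
          have "(\<Sum>k<n. (c(n := of_real s)) k * e' k x) = (\<Sum>k<n. c k * e k x)"
            by (intro sum.cong refl) (auto simp: e'_def)
          then show ?thesis using sp by (simp add: e'_def r_def)
        qed
        then show ?thesis using True by (intro exI[of _ "c(n := of_real s)"]) simp
      next
        case False
        with f obtain b where b: "AE x in M. f x = (\<Sum>k<n. b k * e k x)" using rep by auto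
        have "(\<Sum>k<Suc n. (b(n := 0)) k * e' k x) = (\<Sum>k<n. b k * e k x)" for x
        proof -
          have "(\<Sum>k<n. (b(n := 0)) k * e' k x) = (\<Sum>k<n. b k * e k x)"
            by (intro sum.cong refl) (auto simp: e'_def)
          then show ?thesis by simp
        qed
        then show ?thesis using b by (intro exI[of _ "b(n := 0)"]) simp
      qed
    qed
    show ?thesis
      using n cardI Le' orth' rep' by (intro exI[of _ "Suc n"] exI[of _ e']) auto
  qed
qed

lemma prod_le_sum_pow:
  fixes a :: "nat \<Rightarrow> real"
  assumes a: "\<And>j. j < s \<Longrightarrow> a j \<ge> 0" and s: "s \<ge> 1"
  shows "(\<Prod>j<s. a j) \<le> (\<Sum>j<s. a j ^ s)"
proof -
  define Mx where "Mx = Max (a ` {..<s})"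
  have "0 \<in> {..<s}" using s by simp
  then have ne: "a ` {..<s} \<noteq> {}" by blast
  have "Mx \<in> a ` {..<s}" unfolding Mx_def by (rule Max_in) (use ne in auto)
  then obtain j0 where j0: "j0 < s" "Mx = a j0" by auto
  have le: "a j \<le> Mx" if "j < s" for j unfolding Mx_def by (rule Max_ge) (use that in auto)
  have "(\<Prod>j<s. a j) \<le> (\<Prod>j<s. Mx)" by (rule prod_mono) (use a le in auto)
  also have "\<dots> = a j0 ^ s" using j0 by simp
  also have "\<dots> \<le> (\<Sum>j<s. a j ^ s)" by (rule member_le_sum) (use j0 a in auto)
  finally show ?thesis .
qed

lemma norm_orth:
  fixes n :: nat and e :: "nat \<Rightarrow> 'a \<Rightarrow> complex" and \<beta> :: "nat \<Rightarrow> complex"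
  assumes L: "\<And>k. k < n \<Longrightarrow> L2 M (e k)"
    and orth: "\<And>i j. i < n \<Longrightarrow> j < n \<Longrightarrow> (\<integral>x. e j x * cnj (e i x) \<partial>M) = (if i = j then 1 else 0)"
  shows "(\<integral>x. (cmod (\<Sum>k<n. \<beta> k * e k x))^2 \<partial>M) = (\<Sum>k<n. (cmod (\<beta> k))^2)"
proof -
  define b where "b = (\<lambda>k. cnj (\<beta> k))"
  have pt: "(cmod (\<Sum>k<n. \<beta> k * e k x))^2 = Re (qf n (outer n b b) (\<lambda>k. e k x))" for x
  proof -
    have "ip n (\<lambda>k. e k x) b = cnj (\<Sum>k<n. \<beta> k * e k x)" by (simp add: ip_def b_def mult.commute)
    then have "cmod (ip n (\<lambda>k. e k x) b) = cmod (\<Sum>k<n. \<beta> k * e k x)" by (simp only: complex_mod_cnj)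
    then show ?thesis by (simp only: qf_outer_self Re_complex_of_real)
  qed
  have "(\<integral>x. (cmod (\<Sum>k<n. \<beta> k * e k x))^2 \<partial>M) = (\<integral>x. Re (qf n (outer n b b) (\<lambda>k. e k x)) \<partial>M)"
    by (simp only: pt)
  also have "\<dots> = Re (tr n (outer n b b))"
    using integral_Re[OF int_qf(1)[OF L orth, where Z="outer n b b"]] int_qf(2)[OF L orth, where Z="outer n b b"] by simp
  also have "\<dots> = (\<Sum>k<n. (cmod (\<beta> k))^2)" by (simp add: tr_outer ip_self b_def)
  finally show ?thesis .
qed

lemma L2_prod:
  fixes u :: "nat \<Rightarrow> 'a \<Rightarrow> complex"
  assumes um: "\<And>i. i < N \<Longrightarrow> u i \<in> borel_measurable M"
    and ui: "\<And>i. i < N \<Longrightarrow> integrable M (\<lambda>x. norm (u i x) ^ (2 * s))"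
    and s: "1 \<le> s" and \<alpha>: "\<alpha> \<in> PiE {..<s} (\<lambda>_. {..<N})"
  shows "L2 M (\<lambda>x. \<Prod>j<s. u (\<alpha> j) x)"
proof -
  have aj: "\<alpha> j < N" if "j < s" for j using \<alpha> that by (auto simp: PiE_def Pi_def)
  have meas: "(\<lambda>x. \<Prod>j<s. u (\<alpha> j) x) \<in> borel_measurable M"
    by (rule borel_measurable_prod) (simp add: um aj)
  have "integrable M (\<lambda>x. (cmod (\<Prod>j<s. u (\<alpha> j) x))^2)"
  proof (rule Bochner_Integration.integrable_bound)
    show "integrable M (\<lambda>x. \<Sum>j<s. norm (u (\<alpha> j) x) ^ (2 * s))"
      by (intro Bochner_Integration.integrable_sum) (simp add: ui aj)
    show "(\<lambda>x. (cmod (\<Prod>j<s. u (\<alpha> j) x))^2) \<in> borel_measurable M" using meas by measurable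
    show "AE x in M. norm ((cmod (\<Prod>j<s. u (\<alpha> j) x))^2) \<le> norm (\<Sum>j<s. norm (u (\<alpha> j) x) ^ (2 * s))"
    proof (intro AE_I2)
      fix x
      have "(cmod (\<Prod>j<s. u (\<alpha> j) x))^2 = (\<Prod>j<s. (cmod (u (\<alpha> j) x))^2)"
        by (simp add: prod_norm power2_eq_square prod.distrib)
      also have "\<dots> \<le> (\<Sum>j<s. ((cmod (u (\<alpha> j) x))^2) ^ s)" by (rule prod_le_sum_pow) (use s in auto)
      also have "\<dots> = (\<Sum>j<s. norm (u (\<alpha> j) x) ^ (2 * s))" by (simp add: power_mult)
      finally show "norm ((cmod (\<Prod>j<s. u (\<alpha> j) x))^2) \<le> norm (\<Sum>j<s. norm (u (\<alpha> j) x) ^ (2 * s))"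
        by (simp add: sum_nonneg)
    qed
  qed
  then show ?thesis using meas by (simp add: L2_def)
qed

lemma pow_sum_expand:
  fixes g :: "nat \<Rightarrow> complex"
  shows "(\<Sum>i<N. g i) ^ s = (\<Sum>\<alpha>\<in>PiE {..<s} (\<lambda>_. {..<N}). \<Prod>j<s. g (\<alpha> j))"
proof -
  have "(\<Sum>i<N. g i) ^ s = (\<Prod>j<s. \<Sum>i<N. g i)" by simp
  also have "\<dots> = (\<Sum>\<alpha>\<in>PiE {..<s} (\<lambda>_. {..<N}). \<Prod>j<s. g (\<alpha> j))"
    by (rule prod_sum_PiE) auto
  finally show ?thesis .
qed

lemma pw: "cmod z ^ (2 * s) = (cmod (z ^ s))^2"
  by (simp add: norm_power power_mult[symmetric] mult.commute)

theorem main_complex: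
  fixes \<mu> :: "(nat \<Rightarrow> real) measure" and u :: "nat \<Rightarrow> (nat \<Rightarrow> real) \<Rightarrow> complex"
  assumes ps: "prob_space \<mu>" and s: "1 \<le> s"
    and um: "\<And>i. i < N \<Longrightarrow> u i \<in> borel_measurable \<mu>"
    and ui: "\<And>i. i < N \<Longrightarrow> integrable \<mu> (\<lambda>x. norm (u i x) ^ (2 * s))"
    and m: "4 * real N ^ s \<le> real m"
  shows "\<exists>\<xi> w. (\<forall>\<nu><m. \<xi> \<nu> \<in> space \<mu> \<and> w \<nu> > 0) \<and>
    (\<forall>c. let f = (\<lambda>x. \<Sum>i<N. c i * u i x) in
       1 * Lp_pow \<mu> s f \<le> (\<Sum>\<nu><m. w \<nu> * cmod (f (\<xi> \<nu>)) ^ (2 * s)) \<and>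
       (\<Sum>\<nu><m. w \<nu> * cmod (f (\<xi> \<nu>)) ^ (2 * s)) \<le> 12 * Lp_pow \<mu> s f)"
proof -
  define I where "I = PiE {..<s} (\<lambda>_. {..<N::nat})"
  define \<phi> where "\<phi> \<alpha> x = (\<Prod>j<s. u (\<alpha> j) x)" for \<alpha> x
  define F where "F = \<phi> ` I"
  have finI: "finite I" by (simp add: I_def finite_PiE)
  have cardI: "card I = N ^ s" by (simp add: I_def card_PiE)
  have finF: "finite F" using finI by (simp add: F_def)
  have cardF: "card F \<le> N ^ s" using card_image_le[OF finI, of \<phi>] cardI by (simp add: F_def)
  have LF: "L2 \<mu> f" if "f \<in> F" for f
  proof -
    obtain \<alpha> where a: "\<alpha> \<in> I" "f = \<phi> \<alpha>" using \<open>f \<in> F\<close> by (auto simp: F_def)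
    show ?thesis unfolding a(2) \<phi>_def
      by (rule L2_prod[where N=N]) (use um ui s a(1) in \<open>auto simp: I_def\<close>)
  qed
  obtain n e where n: "n \<le> card F" and Le: "\<forall>k<n. L2 \<mu> (e k)"
    and orth: "\<forall>i<n. \<forall>j<n. (\<integral>x. e j x * cnj (e i x) \<partial>\<mu>) = (if i = j then 1 else 0)"
    and rep: "\<forall>f\<in>F. \<exists>b. AE x in \<mu>. f x = (\<Sum>k<n. b k * e k x)"
    using gram_schmidt[OF finF LF] by blast
  from rep obtain B where B: "\<forall>f\<in>F. AE x in \<mu>. f x = (\<Sum>k<n. B f k * e k x)" by metis
  define P where "P x \<longleftrightarrow> (\<forall>f\<in>F. f x = (\<Sum>k<n. B f k * e k x))" for x
  have AP: "AE x in \<mu>. P x" unfolding P_def by (rule AE_finite_allI[OF finF]) (use B in blast)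
  have nm: "4 * real n \<le> real m"
  proof -
    have "real n \<le> real N ^ s" using n cardF by (metis le_trans of_nat_le_iff of_nat_power)
    then show ?thesis using m by linarith
  qed
  have L': "\<And>k. k < n \<Longrightarrow> L2 \<mu> (e k)" using Le by blast
  have orth': "\<And>i j. i < n \<Longrightarrow> j < n \<Longrightarrow> (\<integral>x. e j x * cnj (e i x) \<partial>\<mu>) = (if i = j then 1 else 0)"
    using orth by blast
  obtain \<xi> w where xw: "\<forall>\<nu><m. \<xi> \<nu> \<in> space \<mu> \<and> P (\<xi> \<nu>) \<and> w \<nu> > 0"
    and bnd: "\<forall>\<beta>. (\<Sum>k<n. (cmod (\<beta> k))^2) \<le> (\<Sum>\<nu><m. w \<nu> * (cmod (\<Sum>k<n. \<beta> k * e k (\<xi> \<nu>)))^2) \<and>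
           (\<Sum>\<nu><m. w \<nu> * (cmod (\<Sum>k<n. \<beta> k * e k (\<xi> \<nu>)))^2) \<le> 12 * (\<Sum>k<n. (cmod (\<beta> k))^2)"
    using bss_main[OF ps L' orth' AP nm] by blast
  show ?thesis
  proof (intro exI conjI allI impI)
    fix \<nu> assume "\<nu> < m" then show "\<xi> \<nu> \<in> space \<mu>" "w \<nu> > 0" using xw by auto
  next
    fix c :: "nat \<Rightarrow> complex"
    define f where "f = (\<lambda>x. \<Sum>i<N. c i * u i x)"
    define \<beta> where "\<beta> k = (\<Sum>\<alpha>\<in>I. (\<Prod>j<s. c (\<alpha> j)) * B (\<phi> \<alpha>) k)" for k
    have fs: "f x ^ s = (\<Sum>k<n. \<beta> k * e k x)" if Px: "P x" for x
    proof -
      have "f x ^ s = (\<Sum>\<alpha>\<in>I. \<Prod>j<s. c (\<alpha> j) * u (\<alpha> j) x)"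
        unfolding f_def I_def by (rule pow_sum_expand)
      also have "\<dots> = (\<Sum>\<alpha>\<in>I. (\<Prod>j<s. c (\<alpha> j)) * \<phi> \<alpha> x)"
        by (simp add: \<phi>_def prod.distrib)
      also have "\<dots> = (\<Sum>\<alpha>\<in>I. (\<Prod>j<s. c (\<alpha> j)) * (\<Sum>k<n. B (\<phi> \<alpha>) k * e k x))"
        by (intro sum.cong refl) (use Px in \<open>auto simp: P_def F_def\<close>)
      also have "\<dots> = (\<Sum>k<n. \<Sum>\<alpha>\<in>I. (\<Prod>j<s. c (\<alpha> j)) * B (\<phi> \<alpha>) k * e k x)"
        by (subst sum.swap) (simp add: sum_distrib_left mult.assoc)
      also have "\<dots> = (\<Sum>k<n. \<beta> k * e k x)"
        by (simp add: \<beta>_def sum_distrib_right)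
      finally show ?thesis .
    qed
    have fm: "f \<in> borel_measurable \<mu>" unfolding f_def
      by (intro borel_measurable_sum borel_measurable_times) (auto simp: um)
    have em: "(\<lambda>x. \<Sum>k<n. \<beta> k * e k x) \<in> borel_measurable \<mu>"
      using Le by (intro borel_measurable_sum borel_measurable_times) (auto simp: L2_def)
    have Lp: "Lp_pow \<mu> s f = (\<Sum>k<n. (cmod (\<beta> k))^2)"
    proof -
      have "Lp_pow \<mu> s f = (\<integral>x. (cmod (f x ^ s))^2 \<partial>\<mu>)"
        by (simp add: Lp_pow_def norm_power power_mult[symmetric] mult.commute)
      also have "\<dots> = (\<integral>x. (cmod (\<Sum>k<n. \<beta> k * e k x))^2 \<partial>\<mu>)"
      proof (rule integral_cong_AE)
        show "(\<lambda>x. (cmod (f x ^ s))^2) \<in> borel_measurable \<mu>" using fm by measurable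
        show "(\<lambda>x. (cmod (\<Sum>k<n. \<beta> k * e k x))^2) \<in> borel_measurable \<mu>" using em by measurable
        show "AE x in \<mu>. (cmod (f x ^ s))^2 = (cmod (\<Sum>k<n. \<beta> k * e k x))^2"
          using AP by (rule AE_mp) (intro AE_I2, simp add: fs)
      qed
      also have "\<dots> = (\<Sum>k<n. (cmod (\<beta> k))^2)" by (rule norm_orth[OF L' orth'])
      finally show ?thesis .
    qed
    have samp: "(\<Sum>\<nu><m. w \<nu> * cmod (f (\<xi> \<nu>)) ^ (2 * s)) = (\<Sum>\<nu><m. w \<nu> * (cmod (\<Sum>k<n. \<beta> k * e k (\<xi> \<nu>)))^2)"
    proof (intro sum.cong refl)
      fix \<nu> assume "\<nu> \<in> {..<m}"
      then have "P (\<xi> \<nu>)" using xw by auto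
      then have "cmod (f (\<xi> \<nu>)) ^ (2 * s) = (cmod (\<Sum>k<n. \<beta> k * e k (\<xi> \<nu>)))^2"
        using fs[of "\<xi> \<nu>"] pw[of "f (\<xi> \<nu>)"] by simp
      then show "w \<nu> * cmod (f (\<xi> \<nu>)) ^ (2 * s) = w \<nu> * (cmod (\<Sum>k<n. \<beta> k * e k (\<xi> \<nu>)))^2" by simp
    qed
    show "let f = (\<lambda>x. \<Sum>i<N. c i * u i x) in
       1 * Lp_pow \<mu> s f \<le> (\<Sum>\<nu><m. w \<nu> * cmod (f (\<xi> \<nu>)) ^ (2 * s)) \<and>
       (\<Sum>\<nu><m. w \<nu> * cmod (f (\<xi> \<nu>)) ^ (2 * s)) \<le> 12 * Lp_pow \<mu> s f"
      unfolding Let_def f_def[symmetric] using bnd[rule_format, of \<beta>] samp Lp by simp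
  qed
qed

theorem mainTheorem7:
  shows "\<exists>C1 C2 C3 :: real. C1 > 0 \<and> C2 > 0 \<and> C3 > 0 \<and>
    (\<forall>(d::nat) \<Omega> \<mu> (s::nat) (N::nat) (u :: nat \<Rightarrow> (nat \<Rightarrow> real) \<Rightarrow> real) (m::nat).
       compact_borel_prob d \<Omega> \<mu> \<and> s \<ge> 2 \<and> L_basis \<mu> s N u \<and> real m \<ge> C3 * real N ^ s \<longrightarrow>
       (\<exists>(\<xi> :: nat \<Rightarrow> nat \<Rightarrow> real) (w :: nat \<Rightarrow> real).
          (\<forall>\<nu><m. \<xi> \<nu> \<in> \<Omega> \<and> w \<nu> > 0) \<and>
          (\<forall>c :: nat \<Rightarrow> real. let f = (\<lambda>x. \<Sum>i<N. c i * u i x) in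
             C1 * Lp_pow \<mu> s f \<le> (\<Sum>\<nu><m. w \<nu> * \<bar>f (\<xi> \<nu>)\<bar> ^ (2 * s)) \<and>
             (\<Sum>\<nu><m. w \<nu> * \<bar>f (\<xi> \<nu>)\<bar> ^ (2 * s)) \<le> C2 * Lp_pow \<mu> s f))) \<and>
    (\<forall>(d::nat) \<Omega> \<mu> (s::nat) (N::nat) (u :: nat \<Rightarrow> (nat \<Rightarrow> real) \<Rightarrow> complex) (m::nat).
       compact_borel_prob d \<Omega> \<mu> \<and> s \<ge> 2 \<and> L_basis \<mu> s N u \<and> real m \<ge> C3 * real N ^ s \<longrightarrow>
       (\<exists>(\<xi> :: nat \<Rightarrow> nat \<Rightarrow> real) (w :: nat \<Rightarrow> real).
          (\<forall>\<nu><m. \<xi> \<nu> \<in> \<Omega> \<and> w \<nu> > 0) \<and>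
          (\<forall>c :: nat \<Rightarrow> complex. let f = (\<lambda>x. \<Sum>i<N. c i * u i x) in
             C1 * Lp_pow \<mu> s f \<le> (\<Sum>\<nu><m. w \<nu> * cmod (f (\<xi> \<nu>)) ^ (2 * s)) \<and>
             (\<Sum>\<nu><m. w \<nu> * cmod (f (\<xi> \<nu>)) ^ (2 * s)) \<le> C2 * Lp_pow \<mu> s f)))"
proof -
  have cplx: "\<forall>(d::nat) \<Omega> \<mu> (s::nat) (N::nat) (u :: nat \<Rightarrow> (nat \<Rightarrow> real) \<Rightarrow> complex) (m::nat).
       compact_borel_prob d \<Omega> \<mu> \<and> s \<ge> 2 \<and> L_basis \<mu> s N u \<and> real m \<ge> 4 * real N ^ s \<longrightarrow>
       (\<exists>(\<xi> :: nat \<Rightarrow> nat \<Rightarrow> real) (w :: nat \<Rightarrow> real).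
          (\<forall>\<nu><m. \<xi> \<nu> \<in> \<Omega> \<and> w \<nu> > 0) \<and>
          (\<forall>c :: nat \<Rightarrow> complex. let f = (\<lambda>x. \<Sum>i<N. c i * u i x) in
             1 * Lp_pow \<mu> s f \<le> (\<Sum>\<nu><m. w \<nu> * cmod (f (\<xi> \<nu>)) ^ (2 * s)) \<and>
             (\<Sum>\<nu><m. w \<nu> * cmod (f (\<xi> \<nu>)) ^ (2 * s)) \<le> 12 * Lp_pow \<mu> s f))"
  proof (intro allI impI)
    fix d \<Omega> \<mu> s N m and u :: "nat \<Rightarrow> (nat \<Rightarrow> real) \<Rightarrow> complex"
    assume a: "compact_borel_prob d \<Omega> \<mu> \<and> s \<ge> 2 \<and> L_basis \<mu> s N u \<and> real m \<ge> 4 * real N ^ s"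
    have ps: "prob_space \<mu>" and sp: "space \<mu> = \<Omega>" using a by (auto simp: compact_borel_prob_def)
    have um: "\<And>i. i < N \<Longrightarrow> u i \<in> borel_measurable \<mu>"
      and ui: "\<And>i. i < N \<Longrightarrow> integrable \<mu> (\<lambda>x. norm (u i x) ^ (2 * s))"
      using a by (auto simp: L_basis_def)
    have s: "1 \<le> s" using a by simp
    have m: "4 * real N ^ s \<le> real m" using a by simp
    show "\<exists>(\<xi> :: nat \<Rightarrow> nat \<Rightarrow> real) (w :: nat \<Rightarrow> real).
          (\<forall>\<nu><m. \<xi> \<nu> \<in> \<Omega> \<and> w \<nu> > 0) \<and>
          (\<forall>c :: nat \<Rightarrow> complex. let f = (\<lambda>x. \<Sum>i<N. c i * u i x) in
             1 * Lp_pow \<mu> s f \<le> (\<Sum>\<nu><m. w \<nu> * cmod (f (\<xi> \<nu>)) ^ (2 * s)) \<and>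
             (\<Sum>\<nu><m. w \<nu> * cmod (f (\<xi> \<nu>)) ^ (2 * s)) \<le> 12 * Lp_pow \<mu> s f)"
      using main_complex[OF ps s um ui m] sp by auto
  qed
  have real: "\<forall>(d::nat) \<Omega> \<mu> (s::nat) (N::nat) (u :: nat \<Rightarrow> (nat \<Rightarrow> real) \<Rightarrow> real) (m::nat).
       compact_borel_prob d \<Omega> \<mu> \<and> s \<ge> 2 \<and> L_basis \<mu> s N u \<and> real m \<ge> 4 * real N ^ s \<longrightarrow>
       (\<exists>(\<xi> :: nat \<Rightarrow> nat \<Rightarrow> real) (w :: nat \<Rightarrow> real).
          (\<forall>\<nu><m. \<xi> \<nu> \<in> \<Omega> \<and> w \<nu> > 0) \<and>
          (\<forall>c :: nat \<Rightarrow> real. let f = (\<lambda>x. \<Sum>i<N. c i * u i x) in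
             1 * Lp_pow \<mu> s f \<le> (\<Sum>\<nu><m. w \<nu> * \<bar>f (\<xi> \<nu>)\<bar> ^ (2 * s)) \<and>
             (\<Sum>\<nu><m. w \<nu> * \<bar>f (\<xi> \<nu>)\<bar> ^ (2 * s)) \<le> 12 * Lp_pow \<mu> s f))"
  proof (intro allI impI)
    fix d \<Omega> \<mu> s N m and u :: "nat \<Rightarrow> (nat \<Rightarrow> real) \<Rightarrow> real"
    assume a: "compact_borel_prob d \<Omega> \<mu> \<and> s \<ge> 2 \<and> L_basis \<mu> s N u \<and> real m \<ge> 4 * real N ^ s"
    have ps: "prob_space \<mu>" and sp: "space \<mu> = \<Omega>" using a by (auto simp: compact_borel_prob_def)
    define uc where "uc i x = complex_of_real (u i x)" for i x
    have um: "\<And>i. i < N \<Longrightarrow> uc i \<in> borel_measurable \<mu>"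
      using a unfolding uc_def by (auto simp: L_basis_def)
    have ui: "\<And>i. i < N \<Longrightarrow> integrable \<mu> (\<lambda>x. norm (uc i x) ^ (2 * s))"
      using a by (auto simp: L_basis_def uc_def)
    have s: "1 \<le> s" using a by simp
    have m: "4 * real N ^ s \<le> real m" using a by simp
    obtain \<xi> w where xw: "\<forall>\<nu><m. \<xi> \<nu> \<in> space \<mu> \<and> w \<nu> > 0"
      and bd: "\<forall>c. let f = (\<lambda>x. \<Sum>i<N. c i * uc i x) in
       1 * Lp_pow \<mu> s f \<le> (\<Sum>\<nu><m. w \<nu> * cmod (f (\<xi> \<nu>)) ^ (2 * s)) \<and>
       (\<Sum>\<nu><m. w \<nu> * cmod (f (\<xi> \<nu>)) ^ (2 * s)) \<le> 12 * Lp_pow \<mu> s f"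
      using main_complex[where u=uc, OF ps s um ui m] by blast
    show "\<exists>(\<xi> :: nat \<Rightarrow> nat \<Rightarrow> real) (w :: nat \<Rightarrow> real).
          (\<forall>\<nu><m. \<xi> \<nu> \<in> \<Omega> \<and> w \<nu> > 0) \<and>
          (\<forall>c :: nat \<Rightarrow> real. let f = (\<lambda>x. \<Sum>i<N. c i * u i x) in
             1 * Lp_pow \<mu> s f \<le> (\<Sum>\<nu><m. w \<nu> * \<bar>f (\<xi> \<nu>)\<bar> ^ (2 * s)) \<and>
             (\<Sum>\<nu><m. w \<nu> * \<bar>f (\<xi> \<nu>)\<bar> ^ (2 * s)) \<le> 12 * Lp_pow \<mu> s f)"
    proof (rule exI[of _ \<xi>], rule exI[of _ w], rule conjI)
      show "\<forall>\<nu><m. \<xi> \<nu> \<in> \<Omega> \<and> w \<nu> > 0" using xw sp by auto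
    next
      show "\<forall>c :: nat \<Rightarrow> real. let f = (\<lambda>x. \<Sum>i<N. c i * u i x) in
             1 * Lp_pow \<mu> s f \<le> (\<Sum>\<nu><m. w \<nu> * \<bar>f (\<xi> \<nu>)\<bar> ^ (2 * s)) \<and>
             (\<Sum>\<nu><m. w \<nu> * \<bar>f (\<xi> \<nu>)\<bar> ^ (2 * s)) \<le> 12 * Lp_pow \<mu> s f"
      proof
      fix c :: "nat \<Rightarrow> real"
      define f where "f = (\<lambda>x. \<Sum>i<N. c i * u i x)"
      define f' where "f' = (\<lambda>x. \<Sum>i<N. complex_of_real (c i) * uc i x)"
      have ff: "f' x = complex_of_real (f x)" for x by (simp add: f'_def f_def uc_def)
      have Lp: "Lp_pow \<mu> s f' = Lp_pow \<mu> s f" by (simp add: Lp_pow_def ff)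
      have sm: "(\<Sum>\<nu><m. w \<nu> * cmod (f' (\<xi> \<nu>)) ^ (2 * s)) = (\<Sum>\<nu><m. w \<nu> * \<bar>f (\<xi> \<nu>)\<bar> ^ (2 * s))"
        by (simp add: ff)
      have "1 * Lp_pow \<mu> s f' \<le> (\<Sum>\<nu><m. w \<nu> * cmod (f' (\<xi> \<nu>)) ^ (2 * s)) \<and>
       (\<Sum>\<nu><m. w \<nu> * cmod (f' (\<xi> \<nu>)) ^ (2 * s)) \<le> 12 * Lp_pow \<mu> s f'"
        using bd[rule_format, of "\<lambda>i. complex_of_real (c i)"] unfolding Let_def f'_def by simp
      then show "let f = (\<lambda>x. \<Sum>i<N. c i * u i x) in
             1 * Lp_pow \<mu> s f \<le> (\<Sum>\<nu><m. w \<nu> * \<bar>f (\<xi> \<nu>)\<bar> ^ (2 * s)) \<and>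
             (\<Sum>\<nu><m. w \<nu> * \<bar>f (\<xi> \<nu>)\<bar> ^ (2 * s)) \<le> 12 * Lp_pow \<mu> s f"
        unfolding Let_def f_def[symmetric] Lp sm by simp
      qed
    qed
  qed
  show ?thesis
    by (rule exI[of _ 1], rule exI[of _ 12], rule exI[of _ 4]) (use cplx real in simp)
qed

end
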